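(* Let $n\ge 2$ and $M,M'\in M_n(k)$. Then the DG algebras $\mathcal{A}_{\mathcal{O}_{-1}(k^n)}(M)$ and $\mathcal{A}_{\mathcal{O}_{-1}(k^n)}(M')$ are isomorphic (as DG algebras) if and only if there exists $C=(c_{ij})_{n\times n}\in \mathrm{QPL}_n(k)$ such that $M'=C^{-1}M\,(c_{ij}^2)_{n\times n}$.
   Context: $k$ is an algebraically closed field of characteristic zero. A connected cochain DG algebra is a graded $k$-algebra $\mathcal{A}=\bigoplus_{i\ge0}\mathcal{A}^i$ with $\mathcal{A}^0=k$ and a degree $+1$ differential $\partial$ with $\partial^2=0$ satisfying the Leibniz rule $\partial(ab)=\partial(a)b+(-1)^{|a|}a\partial(b)$. $\mathcal{O}_{-1}(k^n)$ is the graded $k$-algebra generated by degree-one elements $x_1,\dots,x_n$ subject to $x_ix_j=-x_jx_i$ for $1\le i<j\le n$. For $M=(m_{ij})\in M_n(k)$, $\mathcal{A}_{\mathcal{O}_{-1}(k^n)}(M)$ denotes the connected cochain DG algebra with underlying graded algebra $\mathcal{O}_{-1}(k^n)$ and differential determined by $\partial(x_i)=\sum_{j=1}^n m_{ij}x_j^2$ and the Leibniz rule. A DG algebra isomorphism is an isomorphism of graded algebras commuting with the differentials. $\mathrm{QPL}_n(k)$ is the set of invertible $n\times n$ matrices over $k$ having exactly one nonzero entry in each row and each column (nonsingular quasi-permutation matrices). For $C=(c_{ij})$, $(c_{ij}^2)_{n\times n}$ is the matrix of entrywise squares. *)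

theory Defs
  imports "Jordan_Normal_Form.Matrix" "HOL-Computational_Algebra.Polynomial"
begin

text \<open>Concrete model of the graded algebra O_{-1}(k^n) with generators x_0,...,x_{n-1}
  (0-based indexing).  An element is a finitely supported coefficient function on
  exponent vectors a :: nat => nat (with a i = 0 for i >= n); the exponent vector a
  stands for the ordered monomial x_0^(a 0) * ... * x_(n-1)^(a (n-1)).\<close>

definition mons :: "nat \<Rightarrow> (nat \<Rightarrow> nat) set" where
  "mons n = {a. \<forall>i\<ge>n. a i = 0}"

definition mdeg :: "nat \<Rightarrow> (nat \<Rightarrow> nat) \<Rightarrow> nat" where
  "mdeg n a = (\<Sum>i<n. a i)"

text \<open>x^a * x^b = msgn n a b * x^(a+b), since x_j x_i = - x_i x_j for i < j.\<close>
definition msgn :: "nat \<Rightarrow> (nat \<Rightarrow> nat) \<Rightarrow> (nat \<Rightarrow> nat) \<Rightarrow> 'k::field" where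
  "msgn n a b = (-1) ^ (\<Sum>i<n. \<Sum>j<i. a i * b j)"

definition supp :: "((nat \<Rightarrow> nat) \<Rightarrow> 'k::field) \<Rightarrow> (nat \<Rightarrow> nat) set" where
  "supp f = {a. f a \<noteq> 0}"

definition OA :: "nat \<Rightarrow> ((nat \<Rightarrow> nat) \<Rightarrow> 'k::field) set" where
  "OA n = {f. finite (supp f) \<and> supp f \<subseteq> mons n}"

definition ozero :: "(nat \<Rightarrow> nat) \<Rightarrow> 'k::field" where
  "ozero = (\<lambda>_. 0)"

definition oone :: "(nat \<Rightarrow> nat) \<Rightarrow> 'k::field" where
  "oone = (\<lambda>a. if a = (\<lambda>_. 0) then 1 else 0)"

definition oadd :: "((nat \<Rightarrow> nat) \<Rightarrow> 'k::field) \<Rightarrow> ((nat \<Rightarrow> nat) \<Rightarrow> 'k) \<Rightarrow> ((nat \<Rightarrow> nat) \<Rightarrow> 'k)" where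
  "oadd f g = (\<lambda>a. f a + g a)"

definition osmult :: "'k::field \<Rightarrow> ((nat \<Rightarrow> nat) \<Rightarrow> 'k) \<Rightarrow> ((nat \<Rightarrow> nat) \<Rightarrow> 'k)" where
  "osmult c f = (\<lambda>a. c * f a)"

definition omul :: "nat \<Rightarrow> ((nat \<Rightarrow> nat) \<Rightarrow> 'k::field) \<Rightarrow> ((nat \<Rightarrow> nat) \<Rightarrow> 'k) \<Rightarrow> ((nat \<Rightarrow> nat) \<Rightarrow> 'k)" where
  "omul n f g = (\<lambda>c. \<Sum>a\<in>supp f. \<Sum>b\<in>supp g.
      if (\<lambda>i. a i + b i) = c then msgn n a b * f a * g b else 0)"

definition xgen :: "nat \<Rightarrow> (nat \<Rightarrow> nat) \<Rightarrow> 'k::field" where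
  "xgen i = (\<lambda>a. if a = (\<lambda>j. if j = i then 1 else 0) then 1 else 0)"

definition ohomog :: "nat \<Rightarrow> nat \<Rightarrow> ((nat \<Rightarrow> nat) \<Rightarrow> 'k::field) \<Rightarrow> bool" where
  "ohomog n d f = (\<forall>a\<in>supp f. mdeg n a = d)"

definition graded_alg_iso :: "nat \<Rightarrow> (((nat \<Rightarrow> nat) \<Rightarrow> 'k::field) \<Rightarrow> ((nat \<Rightarrow> nat) \<Rightarrow> 'k)) \<Rightarrow> bool" where
  "graded_alg_iso n \<phi> =
     (bij_betw \<phi> (OA n) (OA n)
      \<and> (\<forall>f\<in>OA n. \<forall>g\<in>OA n. \<phi> (oadd f g) = oadd (\<phi> f) (\<phi> g))
      \<and> (\<forall>c. \<forall>f\<in>OA n. \<phi> (osmult c f) = osmult c (\<phi> f))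
      \<and> (\<forall>f\<in>OA n. \<forall>g\<in>OA n. \<phi> (omul n f g) = omul n (\<phi> f) (\<phi> g))
      \<and> \<phi> oone = oone
      \<and> (\<forall>d. \<forall>f\<in>OA n. ohomog n d f \<longrightarrow> ohomog n d (\<phi> f)))"

text \<open>d is the differential of A_{O_{-1}(k^n)}(M): the k-linear map with
  d(x_i) = sum_j m_ij x_j^2 satisfying the graded Leibniz rule
  (extended by zero outside the carrier, so that it is unique).\<close>
definition is_diff :: "nat \<Rightarrow> 'k::field mat \<Rightarrow> (((nat \<Rightarrow> nat) \<Rightarrow> 'k) \<Rightarrow> ((nat \<Rightarrow> nat) \<Rightarrow> 'k)) \<Rightarrow> bool" where
  "is_diff n M d =
     ((\<forall>f\<in>OA n. d f \<in> OA n)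
      \<and> (\<forall>f. f \<notin> OA n \<longrightarrow> d f = ozero)
      \<and> (\<forall>f\<in>OA n. \<forall>g\<in>OA n. d (oadd f g) = oadd (d f) (d g))
      \<and> (\<forall>c. \<forall>f\<in>OA n. d (osmult c f) = osmult c (d f))
      \<and> (\<forall>i<n. d (xgen i) = (\<lambda>a. \<Sum>j<n. M $$ (i, j) * omul n (xgen j) (xgen j) a))
      \<and> (\<forall>p. \<forall>f\<in>OA n. \<forall>g\<in>OA n. ohomog n p f \<longrightarrow>
            d (omul n f g) = oadd (omul n (d f) g) (osmult ((-1) ^ p) (omul n f (d g)))))"

definition dga_diff :: "nat \<Rightarrow> 'k::field mat \<Rightarrow> ((nat \<Rightarrow> nat) \<Rightarrow> 'k) \<Rightarrow> ((nat \<Rightarrow> nat) \<Rightarrow> 'k)" where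
  "dga_diff n M = (THE d. is_diff n M d)"

definition dga_isomorphic :: "nat \<Rightarrow> 'k::field mat \<Rightarrow> 'k mat \<Rightarrow> bool" where
  "dga_isomorphic n M M' =
     (\<exists>\<phi>. graded_alg_iso n \<phi> \<and> (\<forall>f\<in>OA n. \<phi> (dga_diff n M f) = dga_diff n M' (\<phi> f)))"

definition QPL :: "nat \<Rightarrow> 'k::field mat set" where
  "QPL n = {C. C \<in> carrier_mat n n \<and> invertible_mat C
     \<and> (\<forall>i<n. \<exists>!j. j < n \<and> C $$ (i, j) \<noteq> 0)
     \<and> (\<forall>j<n. \<exists>!i. i < n \<and> C $$ (i, j) \<noteq> 0)}"

definition alg_closed_type :: "'k::field itself \<Rightarrow> bool" where
  "alg_closed_type _ = (\<forall>p :: 'k poly. degree p > 0 \<longrightarrow> (\<exists>x. poly p x = 0))"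

end

theory Submission
  imports Defs "HOL-Combinatorics.Permutations"
begin

abbreviation padd :: "(nat\<Rightarrow>nat) \<Rightarrow> (nat\<Rightarrow>nat) \<Rightarrow> nat \<Rightarrow> nat" where
  "padd a b \<equiv> (\<lambda>i. a i + b i)"

definition ee :: "nat \<Rightarrow> nat \<Rightarrow> nat" where "ee i = (\<lambda>j. if j = i then 1 else 0)"

definition mon :: "(nat \<Rightarrow> nat) \<Rightarrow> (nat \<Rightarrow> nat) \<Rightarrow> 'k::field" where
  "mon a = (\<lambda>c. if c = a then 1 else 0)"

lemma xgen_mon: "xgen i = mon (ee i)"
  by (simp add: xgen_def mon_def ee_def)

lemma in_OA: "f \<in> OA n \<longleftrightarrow> finite (supp f) \<and> (\<forall>a. f a \<noteq> 0 \<longrightarrow> a \<in> mons n)"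
  by (auto simp: OA_def supp_def)

lemma OA_zero_out: "f \<in> OA n \<Longrightarrow> a \<notin> mons n \<Longrightarrow> f a = 0"
  by (auto simp: in_OA)

lemma supp_mon: "supp (mon a) = {a}"
  by (auto simp: supp_def mon_def)

lemma mon_OA: "a \<in> mons n \<Longrightarrow> mon a \<in> OA n"
  by (auto simp: OA_def supp_mon)

lemma ee_mons: "i < n \<Longrightarrow> ee i \<in> mons n"
  by (auto simp: mons_def ee_def)

lemma xgen_OA: "i < n \<Longrightarrow> xgen i \<in> OA n"
  by (simp add: xgen_mon mon_OA ee_mons)

lemma padd_mons: "a \<in> mons n \<Longrightarrow> b \<in> mons n \<Longrightarrow> padd a b \<in> mons n"
  by (auto simp: mons_def)

lemma zero_mons: "(\<lambda>_. 0) \<in> mons n"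
  by (auto simp: mons_def)

lemma ozero_OA: "ozero \<in> OA n"
  by (auto simp: OA_def supp_def ozero_def)

lemma oone_mon: "oone = mon (\<lambda>_. 0)"
  by (simp add: oone_def mon_def)

lemma oone_OA: "oone \<in> OA n"
  by (simp add: oone_mon mon_OA zero_mons)

lemma oadd_OA: "f \<in> OA n \<Longrightarrow> g \<in> OA n \<Longrightarrow> oadd f g \<in> OA n"
proof -
  assume f: "f \<in> OA n" and g: "g \<in> OA n"
  have "supp (oadd f g) \<subseteq> supp f \<union> supp g" by (auto simp: supp_def oadd_def)
  then show ?thesis using f g unfolding OA_def by (auto intro: finite_subset)
qed

lemma osmult_OA: "f \<in> OA n \<Longrightarrow> osmult c f \<in> OA n"
proof -
  assume f: "f \<in> OA n"
  have "supp (osmult c f) \<subseteq> supp f" by (auto simp: supp_def osmult_def)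
  then show ?thesis using f unfolding OA_def by (auto intro: finite_subset)
qed

lemma sum_OA:
  assumes "finite J" "\<And>j. j \<in> J \<Longrightarrow> F j \<in> OA n"
  shows "(\<lambda>a. \<Sum>j\<in>J. F j a) \<in> OA n"
proof -
  have "supp (\<lambda>a. \<Sum>j\<in>J. F j a) \<subseteq> (\<Union>j\<in>J. supp (F j))"
    by (auto simp: supp_def) (meson sum.neutral)
  moreover have "finite (\<Union>j\<in>J. supp (F j))" using assms by (auto simp: OA_def)
  moreover have "(\<Union>j\<in>J. supp (F j)) \<subseteq> mons n" using assms by (auto simp: OA_def)
  ultimately show ?thesis unfolding OA_def by (auto intro: finite_subset)
qed

lemma omul_super:
  fixes f g :: "(nat \<Rightarrow> nat) \<Rightarrow> 'k::field"
  assumes "finite A" "finite B" "supp f \<subseteq> A" "supp g \<subseteq> B"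
  shows "omul n f g c = (\<Sum>a\<in>A. \<Sum>b\<in>B. if padd a b = c then msgn n a b * f a * g b else 0)"
proof -
  have "omul n f g c = (\<Sum>a\<in>supp f. \<Sum>b\<in>supp g. if padd a b = c then msgn n a b * f a * g b else 0)"
    by (simp add: omul_def)
  also have "\<dots> = (\<Sum>a\<in>supp f. \<Sum>b\<in>B. if padd a b = c then msgn n a b * f a * g b else 0)"
    by (rule sum.cong[OF refl], rule sum.mono_neutral_left) (use assms in \<open>auto simp: supp_def\<close>)
  also have "\<dots> = (\<Sum>a\<in>A. \<Sum>b\<in>B. if padd a b = c then msgn n a b * f a * g b else 0)"
    by (rule sum.mono_neutral_left) (use assms in \<open>auto simp: supp_def intro!: sum.neutral split: if_splits\<close>)
  finally show ?thesis .
qed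

lemma sum_nz_ex: "sum g A \<noteq> 0 \<Longrightarrow> \<exists>a\<in>A. g a \<noteq> 0"
  by (meson sum.neutral)

lemma omul_OA:
  assumes f: "f \<in> OA n" and g: "g \<in> OA n"
  shows "omul n f g \<in> OA n"
proof -
  let ?S = "(\<lambda>(a,b). padd a b) ` (supp f \<times> supp g)"
  have "supp (omul n f g) \<subseteq> ?S"
  proof
    fix c assume "c \<in> supp (omul n f g)"
    then have "omul n f g c \<noteq> 0" by (simp add: supp_def)
    then have "(\<Sum>a\<in>supp f. \<Sum>b\<in>supp g. if padd a b = c then msgn n a b * f a * g b else 0) \<noteq> 0"
      by (simp add: omul_def)
    then obtain a where a: "a \<in> supp f" and "(\<Sum>b\<in>supp g. if padd a b = c then msgn n a b * f a * g b else 0) \<noteq> 0"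
      using sum_nz_ex by blast
    then obtain b where "b \<in> supp g" "(if padd a b = c then msgn n a b * f a * g b else 0) \<noteq> 0"
      using sum_nz_ex by blast
    then have "a \<in> supp f" "b \<in> supp g" "padd a b = c" using a by (auto split: if_splits)
    then show "c \<in> ?S" by force
  qed
  moreover have "finite ?S" using f g by (auto simp: OA_def)
  moreover have "?S \<subseteq> mons n" using f g by (auto simp: OA_def intro!: padd_mons)
  ultimately show ?thesis unfolding OA_def by (auto intro: finite_subset)
qed

lemma msgn_alt: "msgn n a b = (-1) ^ (\<Sum>p<n. \<Sum>q<n. if q < p then a p * b q else 0)"
proof -
  have h: "(\<Sum>q<p. a p * b q) = (\<Sum>q<n. if q < p then a p * b q else 0)" if "p < n" for p
  proof -
    have "(\<Sum>q<n. if q < p then a p * b q else 0) = (\<Sum>q\<in>{..<n} \<inter> {q. q < p}. a p * b q)"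
      by (simp add: sum.inter_restrict)
    also have "{..<n} \<inter> {q. q < p} = {..<p}" using that by auto
    finally show ?thesis by simp
  qed
  have "(\<Sum>i<n. \<Sum>j<i. a i * b j) = (\<Sum>p<n. \<Sum>q<n. if q < p then a p * b q else 0)"
    by (rule sum.cong) (simp_all add: h)
  then show ?thesis unfolding msgn_def by simp
qed

lemma omul_mon_mon:
  "omul n (mon a) (mon b) = (\<lambda>c. if c = padd a b then msgn n a b else (0::'k::field))"
  unfolding omul_def supp_mon by (rule ext) (simp add: mon_def)

lemma ee_apply: "ee i j = (if j = i then 1 else 0)" by (simp add: ee_def)

lemma ee_less: "q < i \<Longrightarrow> ee i q = 0" by (simp add: ee_def)

lemma sum_delta2:
  fixes c :: "'a::comm_monoid_add"
  assumes "finite A" "finite B"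
  shows "(\<Sum>p\<in>A. \<Sum>q\<in>B. if p = i \<and> q = j then c else 0) = (if i \<in> A \<and> j \<in> B then c else 0)"
proof -
  have "\<And>p. (\<Sum>q\<in>B. if p = i \<and> q = j then c else 0) = (if p = i then (if j \<in> B then c else 0) else 0)"
    using assms by (simp add: sum.delta')
  then show ?thesis using assms by (simp add: sum.delta')
qed

lemma msgn_ee_ee: "msgn n (ee i) (ee j) = (if j < i \<and> i < n then -1 else 1)"
proof -
  have "(\<Sum>p<n. \<Sum>q<n. if q < p then ee i p * ee j q else 0) = (if j < i \<and> i < n then 1 else 0)"
  proof -
    have e: "\<And>p q. (if q < p then ee i p * ee j q else 0) = (if p = i \<and> q = j then (if j < i then 1 else 0) else (0::nat))"
      by (simp add: ee_apply)
    show ?thesis unfolding e by (simp add: sum_delta2)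
  qed
  then show ?thesis by (simp add: msgn_alt)
qed

lemma mdeg_ee: "i < n \<Longrightarrow> mdeg n (ee i) = 1"
  by (simp add: mdeg_def ee_def)

lemma mdeg_padd: "mdeg n (padd a b) = mdeg n a + mdeg n b"
  by (simp add: mdeg_def sum.distrib)

definition lin_on :: "nat \<Rightarrow> (((nat \<Rightarrow> nat) \<Rightarrow> 'k::field) \<Rightarrow> ((nat \<Rightarrow> nat) \<Rightarrow> 'k)) \<Rightarrow> bool" where
  "lin_on n L = ((\<forall>f\<in>OA n. \<forall>g\<in>OA n. L (oadd f g) = oadd (L f) (L g))
      \<and> (\<forall>c. \<forall>f\<in>OA n. L (osmult c f) = osmult c (L f)))"

lemma lin_zero: "lin_on n L \<Longrightarrow> L ozero = ozero"
proof -
  assume "lin_on n L"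
  then have "L (osmult 0 ozero) = osmult 0 (L ozero)" using ozero_OA unfolding lin_on_def by blast
  moreover have "osmult 0 ozero = (ozero :: (nat \<Rightarrow> nat) \<Rightarrow> 'a)" by (simp add: osmult_def ozero_def)
  ultimately show ?thesis by (simp add: osmult_def ozero_def)
qed

lemma lin_sum:
  assumes L: "lin_on n L" and J: "finite J" and F: "\<And>j. j \<in> J \<Longrightarrow> F j \<in> OA n"
  shows "L (\<lambda>a. \<Sum>j\<in>J. k j * F j a) = (\<lambda>a. \<Sum>j\<in>J. k j * L (F j) a)"
  using J F
proof (induction J rule: finite_induct)
  case empty
  then show ?case using lin_zero[OF L] by (simp add: ozero_def)
next
  case (insert x J)
  have e: "(\<lambda>a. \<Sum>j\<in>insert x J. k j * F j a) = oadd (osmult (k x) (F x)) (\<lambda>a. \<Sum>j\<in>J. k j * F j a)"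
    using insert by (simp add: oadd_def osmult_def)
  have "\<And>j. j\<in>J \<Longrightarrow> (\<lambda>a. k j * F j a) \<in> OA n"
    using osmult_OA[unfolded osmult_def] insert by auto
  then have "(\<lambda>a. \<Sum>j\<in>J. k j * F j a) \<in> OA n"
    using sum_OA[of J "\<lambda>j a. k j * F j a"] insert by auto
  moreover have "osmult (k x) (F x) \<in> OA n" using insert osmult_OA by auto
  ultimately have "L (oadd (osmult (k x) (F x)) (\<lambda>a. \<Sum>j\<in>J. k j * F j a))
     = oadd (L (osmult (k x) (F x))) (L (\<lambda>a. \<Sum>j\<in>J. k j * F j a))"
    using L unfolding lin_on_def by blast
  moreover have "L (osmult (k x) (F x)) = osmult (k x) (L (F x))" using L insert unfolding lin_on_def by blast
  ultimately show ?case using insert unfolding e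
    by (simp add: oadd_def osmult_def)
qed


definition sh :: "(nat\<Rightarrow>nat) \<Rightarrow> nat \<Rightarrow> nat \<Rightarrow> nat \<Rightarrow> nat" where
  "sh a i j = (\<lambda>t. a t - (if t = i then 1 else 0) + (if t = j then 2 else 0))"

definition Dm :: "nat \<Rightarrow> 'k::field mat \<Rightarrow> (nat\<Rightarrow>nat) \<Rightarrow> (nat\<Rightarrow>nat) \<Rightarrow> 'k" where
  "Dm n M a = (\<lambda>c. \<Sum>i<n. \<Sum>j<n. if odd (a i) \<and> c = sh a i j then (-1)^(\<Sum>q<i. a q) * M$$(i,j) else 0)"

definition dlin :: "nat \<Rightarrow> 'k::field mat \<Rightarrow> ((nat\<Rightarrow>nat)\<Rightarrow>'k) \<Rightarrow> ((nat\<Rightarrow>nat)\<Rightarrow>'k)" where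
  "dlin n M f = (if f \<in> OA n then (\<lambda>c. \<Sum>a\<in>supp f. f a * Dm n M a c) else ozero)"

definition SH :: "nat \<Rightarrow> (nat\<Rightarrow>nat) set \<Rightarrow> (nat\<Rightarrow>nat) set" where
  "SH n A = (\<lambda>(a,i,j). sh a i j) ` (A \<times> {..<n} \<times> {..<n})"

lemma SH_finite: "finite A \<Longrightarrow> finite (SH n A)"
  by (simp add: SH_def)

lemma SH_mem: "a \<in> A \<Longrightarrow> i < n \<Longrightarrow> j < n \<Longrightarrow> sh a i j \<in> SH n A"
  unfolding SH_def by force

lemma sh_mons: "a \<in> mons n \<Longrightarrow> i < n \<Longrightarrow> j < n \<Longrightarrow> sh a i j \<in> mons n"
  by (auto simp: mons_def sh_def)

lemma SH_mons: "A \<subseteq> mons n \<Longrightarrow> SH n A \<subseteq> mons n"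
  unfolding SH_def by (auto intro!: sh_mons)

lemma supp_Dm: "a \<in> A \<Longrightarrow> supp (Dm n M a) \<subseteq> SH n A"
proof
  fix u assume a: "a \<in> A" and "u \<in> supp (Dm n M a)"
  then have "(\<Sum>i<n. \<Sum>j<n. if odd (a i) \<and> u = sh a i j then (-1)^(\<Sum>q<i. a q) * M$$(i,j) else 0) \<noteq> 0"
    by (simp add: supp_def Dm_def)
  then obtain i where i: "i < n" and "(\<Sum>j<n. if odd (a i) \<and> u = sh a i j then (-1)^(\<Sum>q<i. a q) * M$$(i,j) else 0) \<noteq> 0"
    using sum_nz_ex by blast
  then obtain j where j: "j < n" and "(if odd (a i) \<and> u = sh a i j then (-1)^(\<Sum>q<i. a q) * M$$(i,j) else 0) \<noteq> 0"
    using sum_nz_ex by blast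
  then have "u = sh a i j" by (auto split: if_splits)
  then show "u \<in> SH n A" using SH_mem a i j by blast
qed

lemma dlin_super:
  assumes f: "f \<in> OA n" and A: "finite A" "supp f \<subseteq> A"
  shows "dlin n M f c = (\<Sum>a\<in>A. f a * Dm n M a c)"
  unfolding dlin_def using f
  by (simp, intro sum.mono_neutral_left) (use A in \<open>auto simp: supp_def\<close>)

lemma supp_dlin: "f \<in> OA n \<Longrightarrow> supp (dlin n M f) \<subseteq> SH n (supp f)"
proof
  fix u assume f: "f \<in> OA n" and "u \<in> supp (dlin n M f)"
  then have "(\<Sum>a\<in>supp f. f a * Dm n M a u) \<noteq> 0" by (simp add: supp_def dlin_def)
  then obtain a where a: "a \<in> supp f" and "f a * Dm n M a u \<noteq> 0" using sum_nz_ex by blast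
  then have "u \<in> supp (Dm n M a)" by (simp add: supp_def)
  then show "u \<in> SH n (supp f)" using supp_Dm[OF a] by blast
qed

lemma dlin_OA: "f \<in> OA n \<Longrightarrow> dlin n M f \<in> OA n"
proof -
  assume f: "f \<in> OA n"
  then have "finite (supp f)" "supp f \<subseteq> mons n" by (auto simp: OA_def)
  then have "finite (SH n (supp f))" "SH n (supp f) \<subseteq> mons n"
    using SH_finite SH_mons by blast+
  then show ?thesis using supp_dlin[OF f] unfolding OA_def by (auto intro: finite_subset)
qed

lemma dlin_out: "f \<notin> OA n \<Longrightarrow> dlin n M f = ozero"
  by (simp add: dlin_def)

lemma dlin_add: "f \<in> OA n \<Longrightarrow> g \<in> OA n \<Longrightarrow> dlin n M (oadd f g) = oadd (dlin n M f) (dlin n M g)"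
proof (rule ext)
  fix c assume f: "f \<in> OA n" and g: "g \<in> OA n"
  let ?A = "supp f \<union> supp g"
  have fin: "finite ?A" using f g by (auto simp: OA_def)
  have "supp (oadd f g) \<subseteq> ?A" by (auto simp: supp_def oadd_def)
  then have "dlin n M (oadd f g) c = (\<Sum>a\<in>?A. oadd f g a * Dm n M a c)"
    using dlin_super[OF oadd_OA[OF f g] fin] by blast
  also have "\<dots> = (\<Sum>a\<in>?A. f a * Dm n M a c) + (\<Sum>a\<in>?A. g a * Dm n M a c)"
    by (simp add: oadd_def distrib_right sum.distrib)
  also have "\<dots> = dlin n M f c + dlin n M g c"
    using dlin_super[OF f fin] dlin_super[OF g fin] by auto
  finally show "dlin n M (oadd f g) c = oadd (dlin n M f) (dlin n M g) c" by (simp add: oadd_def)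
qed

lemma dlin_smult: "f \<in> OA n \<Longrightarrow> dlin n M (osmult k f) = osmult k (dlin n M f)"
proof (rule ext)
  fix c assume f: "f \<in> OA n"
  have fin: "finite (supp f)" using f by (auto simp: OA_def)
  have "supp (osmult k f) \<subseteq> supp f" by (auto simp: supp_def osmult_def)
  then have "dlin n M (osmult k f) c = (\<Sum>a\<in>supp f. osmult k f a * Dm n M a c)"
    using dlin_super[OF osmult_OA[OF f] fin] by blast
  also have "\<dots> = k * (\<Sum>a\<in>supp f. f a * Dm n M a c)"
    by (simp add: osmult_def sum_distrib_left mult_ac)
  also have "\<dots> = k * dlin n M f c"
    using dlin_super[OF f fin] by auto
  finally show "dlin n M (osmult k f) c = osmult k (dlin n M f) c" by (simp add: osmult_def)
qed

lemma sq_ee: "omul n (xgen j) (xgen j) = mon (\<lambda>t. 2 * ee j t)"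
proof -
  have "padd (ee j) (ee j) = (\<lambda>t. 2 * ee j t)" by auto
  moreover have "msgn n (ee j) (ee j) = (1::'a)" by (simp add: msgn_ee_ee)
  ultimately show ?thesis
    unfolding xgen_mon omul_mon_mon by (auto simp: mon_def)
qed

lemma sh_ee: "sh (ee i) i j = (\<lambda>t. 2 * ee j t)"
  by (auto simp: sh_def ee_def)

lemma dlin_xgen:
  fixes M :: "'k::field mat"
  assumes i: "i < n"
  shows "dlin n M (xgen i) = (\<lambda>a. \<Sum>j<n. M $$ (i, j) * omul n (xgen j) (xgen j) a)"
proof (rule ext)
  fix c
  have "dlin n M (xgen i) c = (\<Sum>a\<in>supp (mon (ee i) :: (nat\<Rightarrow>nat) \<Rightarrow> 'k). mon (ee i) a * Dm n M a c)"
  proof -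
    have "(xgen i :: (nat\<Rightarrow>nat) \<Rightarrow> 'k) \<in> OA n" using xgen_OA[OF i] .
    then have X: "(mon (ee i) :: (nat\<Rightarrow>nat) \<Rightarrow> 'k) \<in> OA n" by (simp add: xgen_mon)
    show ?thesis unfolding dlin_def xgen_mon by (simp only: if_P[OF X])
  qed
  also have "\<dots> = Dm n M (ee i) c" unfolding supp_mon by (simp add: mon_def)
  also have "\<dots> = (\<Sum>i'<n. \<Sum>j<n. if i' = i then (if c = (\<lambda>t. 2 * ee j t) then M$$(i,j) else 0) else 0)"
    unfolding Dm_def
  proof (intro sum.cong refl)
    fix i' j assume "i' \<in> {..<n}" "j \<in> {..<n}"
    have "(\<Sum>q<i. ee i q) = 0" by (simp add: ee_apply)
    then show "(if odd (ee i i') \<and> c = sh (ee i) i' j then (- 1) ^ sum (ee i) {..<i'} * M $$ (i', j) else 0) =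
      (if i' = i then if c = (\<lambda>t. 2 * ee j t) then M $$ (i, j) else 0 else 0)"
      by (auto simp: ee_apply sh_ee)
  qed
  also have "\<dots> = (\<Sum>i'<n. if i' = i then (\<Sum>j<n. if c = (\<lambda>t. 2 * ee j t) then M$$(i,j) else 0) else 0)"
    by (rule sum.cong) auto
  also have "\<dots> = (\<Sum>j<n. if c = (\<lambda>t. 2 * ee j t) then M$$(i,j) else 0)"
    using i by (simp add: sum.delta)
  also have "\<dots> = (\<Sum>j<n. M $$ (i, j) * omul n (xgen j) (xgen j) c)"
    by (rule sum.cong) (auto simp: sq_ee mon_def)
  finally show "dlin n M (xgen i) c = (\<Sum>j<n. M $$ (i, j) * omul n (xgen j) (xgen j) c)" .
qed


lemma neg1_pow_even_mult: "(-1::'a::ring_1)^(x + 2*z) = (-1)^x"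
  by (simp add: power_add power_mult)

lemma sign_from:
  assumes "X + W = Y + 2*(Z::nat)"
  shows "(-1::'a::ring_1)^X = (-1)^Y * (-1)^W"
proof -
  have "(-1::'a)^X = (-1)^(X + 2*W)" by (simp add: neg1_pow_even_mult)
  also have "X + 2*W = (Y + W) + 2*Z" using assms by simp
  finally show ?thesis by (simp add: neg1_pow_even_mult power_add)
qed

lemma sq_neg1: "(-1::'a::ring_1)^k * (-1)^k = 1"
  by (simp flip: power_add add: neg1_pow_even_mult[of 0, simplified] mult_2[symmetric])

lemma shift_sum:
  fixes W :: "nat \<Rightarrow> nat"
  assumes "i < n" "j < n" "x i \<ge> 1"
  shows "(\<Sum>p<n. sh x i j p * W p) + W i = (\<Sum>p<n. x p * W p) + 2 * W j"
proof -
  have "(\<Sum>p<n. sh x i j p * W p + (if p = i then W p else 0)) = (\<Sum>p<n. x p * W p + (if p = j then 2 * W p else 0))"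
    by (rule sum.cong) (use assms in \<open>auto simp: sh_def algebra_simps\<close>)
  then show ?thesis using assms
    by (simp add: sum.distrib sum.delta)
qed

lemma msgn_sh_left:
  assumes "i < n" "j < n" "a i \<ge> 1"
  shows "msgn n (sh a i j) b = (msgn n a b :: 'a::field) * (-1)^(\<Sum>q<i. b q)"
proof -
  define W where "W p = (\<Sum>q<p. b q)" for p
  have e: "\<And>x. (\<Sum>p<n. \<Sum>q<p. x p * b q) = (\<Sum>p<n. x p * W p)"
    by (simp add: W_def sum_distrib_left)
  have "(\<Sum>p<n. sh a i j p * W p) + W i = (\<Sum>p<n. a p * W p) + 2 * W j"
    by (rule shift_sum[where x=a and W=W]) (use assms in auto)
  then show ?thesis unfolding msgn_def e W_def[symmetric] by (rule sign_from)
qed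

lemma msgn_sh_right:
  assumes "i < n" "j < n" "b i \<ge> 1"
  shows "msgn n a (sh b i j) = (msgn n a b :: 'a::field) * (-1)^(\<Sum>q\<in>{i<..<n}. a q)"
proof -
  define W where "W q = (\<Sum>p<n. if q < p then a p else 0)" for q
  have e: "\<And>y. (\<Sum>p<n. \<Sum>q<n. if q < p then a p * y q else 0) = (\<Sum>q<n. y q * W q)"
  proof -
    fix y :: "nat \<Rightarrow> nat"
    have "(\<Sum>p<n. \<Sum>q<n. if q < p then a p * y q else 0) = (\<Sum>q<n. \<Sum>p<n. if q < p then a p * y q else 0)"
      by (rule sum.swap)
    also have "\<dots> = (\<Sum>q<n. y q * W q)"
      unfolding W_def by (simp add: sum_distrib_left mult_ac if_distrib cong: if_cong)
    finally show "?thesis y" .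
  qed
  have Wi: "W i = (\<Sum>q\<in>{i<..<n}. a q)"
  proof -
    have "W i = (\<Sum>p\<in>{..<n} \<inter> {p. i < p}. a p)" unfolding W_def by (simp add: sum.inter_restrict)
    also have "{..<n} \<inter> {p. i < p} = {i<..<n}" by auto
    finally show ?thesis .
  qed
  have "(\<Sum>p<n. sh b i j p * W p) + W i = (\<Sum>p<n. b p * W p) + 2 * W j"
    by (rule shift_sum[where x=b and W=W]) (use assms in auto)
  then show ?thesis unfolding msgn_alt e Wi[symmetric] by (rule sign_from)
qed

lemma sum_split_at:
  fixes x :: "nat \<Rightarrow> nat"
  assumes "i < n"
  shows "(\<Sum>q<n. x q) = (\<Sum>q<i. x q) + x i + (\<Sum>q\<in>{i<..<n}. x q)"
proof -
  have "{..<n} = insert i ({..<i} \<union> {i<..<n})" using assms by auto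
  then have "(\<Sum>q<n. x q) = x i + (\<Sum>q\<in>{..<i} \<union> {i<..<n}. x q)" by simp
  also have "(\<Sum>q\<in>{..<i} \<union> {i<..<n}. x q) = (\<Sum>q<i. x q) + (\<Sum>q\<in>{i<..<n}. x q)"
    by (rule sum.union_disjoint) auto
  finally show ?thesis by simp
qed

lemma padd_sh_left: "a i \<ge> 1 \<Longrightarrow> padd (sh a i j) b = sh (padd a b) i j"
  by (auto simp: sh_def)

lemma padd_sh_right: "b i \<ge> 1 \<Longrightarrow> padd a (sh b i j) = sh (padd a b) i j"
  by (auto simp: sh_def)

lemma term_id:
  fixes m :: "'a::field"
  assumes i: "i < n" and j: "j < n" and p: "mdeg n a = p"
  shows "msgn n a b * (if odd (a i + b i) \<and> c = sh (padd a b) i j then (-1)^(\<Sum>q<i. a q + b q) * m else 0)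
   = (if odd (a i) then (if padd (sh a i j) b = c then msgn n (sh a i j) b else 0) * ((-1)^(\<Sum>q<i. a q) * m) else 0)
   + (-1)^p * (if odd (b i) then (if padd a (sh b i j) = c then msgn n a (sh b i j) else 0) * ((-1)^(\<Sum>q<i. b q) * m) else 0)"
proof -
  define \<mu> where "\<mu> = (msgn n a b :: 'a)"
  define sA where "sA = (-1::'a)^(\<Sum>q<i. a q)"
  define sB where "sB = (-1::'a)^(\<Sum>q<i. b q)"
  define tA where "tA = (-1::'a)^(\<Sum>q\<in>{i<..<n}. a q)"
  have tt: "tA * tA = 1" unfolding tA_def by (rule sq_neg1)
  have sAB: "(-1::'a)^(\<Sum>q<i. a q + b q) = sA * sB" unfolding sA_def sB_def by (simp add: sum.distrib power_add)
  have pp: "(-1::'a)^p = sA * (-1)^(a i) * tA"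
    unfolding sA_def tA_def p[symmetric] mdeg_def sum_split_at[OF i, of a] by (simp add: power_add)
  show ?thesis
  proof (cases "odd (a i)"; cases "odd (b i)")
    assume oa: "odd (a i)" and ob: "odd (b i)"
    have a1: "a i \<ge> 1" "b i \<ge> 1" using odd_pos[OF oa] odd_pos[OF ob] by auto
    have "(-1::'a)^(a i) = -1" using oa by simp
    moreover have "padd (sh a i j) b = sh (padd a b) i j" "padd a (sh b i j) = sh (padd a b) i j"
      using a1 by (auto simp: sh_def)
    moreover have "msgn n (sh a i j) b = \<mu> * sB"
      unfolding \<mu>_def sB_def by (rule msgn_sh_left[where a=a and b=b, OF i j a1(1)])
    moreover have "msgn n a (sh b i j) = \<mu> * tA"
      unfolding \<mu>_def tA_def by (rule msgn_sh_right[where a=a and b=b, OF i j a1(2)])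
    ultimately show ?thesis using oa ob tt
      by (cases "c = sh (padd a b) i j")
        (simp_all add: pp \<mu>_def[symmetric] sA_def[symmetric] sB_def[symmetric] tA_def[symmetric] algebra_simps)
  next
    assume oa: "odd (a i)" and ob: "\<not> odd (b i)"
    have a1: "a i \<ge> 1" using odd_pos[OF oa] by auto
    have "padd (sh a i j) b = sh (padd a b) i j" using a1 by (auto simp: sh_def)
    moreover have "msgn n (sh a i j) b = \<mu> * sB"
      unfolding \<mu>_def sB_def by (rule msgn_sh_left[where a=a and b=b, OF i j a1(1)])
    ultimately show ?thesis using oa ob
      by (cases "c = sh (padd a b) i j")
        (simp_all add: sAB \<mu>_def[symmetric] sA_def[symmetric] sB_def[symmetric] algebra_simps)
  next
    assume oa: "\<not> odd (a i)" and ob: "odd (b i)"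
    have a1: "b i \<ge> 1" using odd_pos[OF ob] by auto
    have "(-1::'a)^(a i) = 1" using oa by simp
    moreover have "padd a (sh b i j) = sh (padd a b) i j" using a1 by (auto simp: sh_def)
    moreover have "msgn n a (sh b i j) = \<mu> * tA"
      unfolding \<mu>_def tA_def by (rule msgn_sh_right[where a=a and b=b, OF i j a1(1)])
    ultimately show ?thesis using oa ob tt
      by (cases "c = sh (padd a b) i j")
        (simp_all add: pp sAB \<mu>_def[symmetric] sA_def[symmetric] sB_def[symmetric] tA_def[symmetric] algebra_simps)
  next
    assume oa: "\<not> odd (a i)" and ob: "\<not> odd (b i)"
    then show ?thesis by simp
  qed
qed


lemma if_mult0: "(if P then x else 0) * (y::'a::mult_zero) = (if P then x * y else 0)"
  by simp

lemma swap3: "(\<Sum>u\<in>U. \<Sum>b\<in>B. \<Sum>a\<in>A. T u b a) = (\<Sum>a\<in>A. \<Sum>b\<in>B. \<Sum>u\<in>U. (T u b a :: 'a::comm_monoid_add))"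
proof -
  have "(\<Sum>u\<in>U. \<Sum>b\<in>B. \<Sum>a\<in>A. T u b a) = (\<Sum>u\<in>U. \<Sum>a\<in>A. \<Sum>b\<in>B. T u b a)"
    by (rule sum.cong[OF refl], rule sum.swap)
  also have "\<dots> = (\<Sum>a\<in>A. \<Sum>u\<in>U. \<Sum>b\<in>B. T u b a)" by (rule sum.swap)
  also have "\<dots> = (\<Sum>a\<in>A. \<Sum>b\<in>B. \<Sum>u\<in>U. T u b a)" by (rule sum.cong[OF refl], rule sum.swap)
  finally show ?thesis .
qed

lemma swap3': "(\<Sum>u\<in>U. \<Sum>a\<in>A. \<Sum>b\<in>B. T u a b) = (\<Sum>a\<in>A. \<Sum>b\<in>B. \<Sum>u\<in>U. (T u a b :: 'a::comm_monoid_add))"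
proof -
  have "(\<Sum>u\<in>U. \<Sum>a\<in>A. \<Sum>b\<in>B. T u a b) = (\<Sum>a\<in>A. \<Sum>u\<in>U. \<Sum>b\<in>B. T u a b)" by (rule sum.swap)
  also have "\<dots> = (\<Sum>a\<in>A. \<Sum>b\<in>B. \<Sum>u\<in>U. T u a b)" by (rule sum.cong[OF refl], rule sum.swap)
  finally show ?thesis .
qed

lemma collapse_pairs:
  fixes F :: "'a \<Rightarrow> 'b \<Rightarrow> 'k::comm_ring_1"
  assumes "finite E" "\<And>a b. a \<in> A \<Longrightarrow> b \<in> B \<Longrightarrow> k a b \<in> E"
  shows "(\<Sum>e\<in>E. (\<Sum>a\<in>A. \<Sum>b\<in>B. if k a b = e then F a b else 0) * G e) = (\<Sum>a\<in>A. \<Sum>b\<in>B. F a b * G (k a b))"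
proof -
  have "(\<Sum>e\<in>E. (\<Sum>a\<in>A. \<Sum>b\<in>B. if k a b = e then F a b else 0) * G e)
      = (\<Sum>e\<in>E. \<Sum>a\<in>A. \<Sum>b\<in>B. if k a b = e then F a b * G e else 0)"
    by (simp add: sum_distrib_right if_mult0)
  also have "\<dots> = (\<Sum>a\<in>A. \<Sum>b\<in>B. \<Sum>e\<in>E. if k a b = e then F a b * G e else 0)" by (rule swap3')
  also have "\<dots> = (\<Sum>a\<in>A. \<Sum>b\<in>B. F a b * G (k a b))"
    using assms by (intro sum.cong refl) (simp add: sum.delta)
  finally show ?thesis .
qed

lemma sum_collapse:
  fixes \<Phi> :: "'u \<Rightarrow> 'k::comm_ring_1"
  assumes "finite U" "\<And>i j. i \<in> I \<Longrightarrow> j \<in> J \<Longrightarrow> P i \<Longrightarrow> h i j \<in> U"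
  shows "(\<Sum>u\<in>U. \<Phi> u * (\<Sum>i\<in>I. \<Sum>j\<in>J. if P i \<and> u = h i j then v i j else 0))
       = (\<Sum>i\<in>I. \<Sum>j\<in>J. if P i then \<Phi> (h i j) * v i j else 0)"
proof -
  have "(\<Sum>u\<in>U. \<Phi> u * (\<Sum>i\<in>I. \<Sum>j\<in>J. if P i \<and> u = h i j then v i j else 0))
      = (\<Sum>u\<in>U. \<Sum>i\<in>I. \<Sum>j\<in>J. if P i \<and> u = h i j then \<Phi> u * v i j else 0)"
    by (simp add: sum_distrib_left if_distrib[of "\<lambda>x. \<Phi> _ * x"] cong: if_cong)
  also have "\<dots> = (\<Sum>i\<in>I. \<Sum>j\<in>J. \<Sum>u\<in>U. if P i \<and> u = h i j then \<Phi> u * v i j else 0)" by (rule swap3')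
  also have "\<dots> = (\<Sum>i\<in>I. \<Sum>j\<in>J. if P i then \<Phi> (h i j) * v i j else 0)"
  proof (intro sum.cong refl)
    fix i j assume "i \<in> I" "j \<in> J"
    then show "(\<Sum>u\<in>U. if P i \<and> u = h i j then \<Phi> u * v i j else 0) = (if P i then \<Phi> (h i j) * v i j else 0)"
      using assms by (cases "P i") (simp_all add: sum.delta)
  qed
  finally show ?thesis .
qed

lemma supp_omul_sub: "supp (omul n f g) \<subseteq> (\<lambda>(a,b). padd a b) ` (supp f \<times> supp g)"
proof
  fix c assume "c \<in> supp (omul n f g)"
  then have "(\<Sum>a\<in>supp f. \<Sum>b\<in>supp g. if padd a b = c then msgn n a b * f a * g b else 0) \<noteq> 0"
    by (simp add: omul_def supp_def)
  then obtain a where a: "a \<in> supp f" and "(\<Sum>b\<in>supp g. if padd a b = c then msgn n a b * f a * g b else 0) \<noteq> 0"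
    using sum_nz_ex by blast
  then obtain b where "b \<in> supp g" "(if padd a b = c then msgn n a b * f a * g b else 0) \<noteq> 0"
    using sum_nz_ex by blast
  then show "c \<in> (\<lambda>(a,b). padd a b) ` (supp f \<times> supp g)" using a by (force split: if_splits)
qed

lemma omul_lin_left:
  fixes F g :: "(nat \<Rightarrow> nat) \<Rightarrow> 'k::field"
  assumes "finite U" "finite B" "supp F \<subseteq> U" "supp g \<subseteq> B" "\<And>u. F u = (\<Sum>a\<in>A. f a * D a u)"
  shows "omul n F g c = (\<Sum>a\<in>A. \<Sum>b\<in>B. f a * g b * (\<Sum>u\<in>U. (if padd u b = c then msgn n u b else 0) * D a u))"
proof -
  have "omul n F g c = (\<Sum>u\<in>U. \<Sum>b\<in>B. if padd u b = c then msgn n u b * F u * g b else 0)"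
    by (rule omul_super) (use assms in auto)
  also have "\<dots> = (\<Sum>u\<in>U. \<Sum>b\<in>B. \<Sum>a\<in>A. f a * g b * ((if padd u b = c then msgn n u b else 0) * D a u))"
    by (intro sum.cong refl) (simp add: assms(5) sum_distrib_left sum_distrib_right mult_ac)
  also have "\<dots> = (\<Sum>a\<in>A. \<Sum>b\<in>B. \<Sum>u\<in>U. f a * g b * ((if padd u b = c then msgn n u b else 0) * D a u))"
    by (rule swap3)
  also have "\<dots> = (\<Sum>a\<in>A. \<Sum>b\<in>B. f a * g b * (\<Sum>u\<in>U. (if padd u b = c then msgn n u b else 0) * D a u))"
    by (simp add: sum_distrib_left)
  finally show ?thesis .
qed

lemma omul_lin_right:
  fixes f G :: "(nat \<Rightarrow> nat) \<Rightarrow> 'k::field"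
  assumes "finite A" "finite W" "supp f \<subseteq> A" "supp G \<subseteq> W" "\<And>w. G w = (\<Sum>b\<in>B. g b * D b w)"
  shows "omul n f G c = (\<Sum>a\<in>A. \<Sum>b\<in>B. f a * g b * (\<Sum>w\<in>W. (if padd a w = c then msgn n a w else 0) * D b w))"
proof -
  have "omul n f G c = (\<Sum>a\<in>A. \<Sum>w\<in>W. if padd a w = c then msgn n a w * f a * G w else 0)"
    by (rule omul_super) (use assms in auto)
  also have "\<dots> = (\<Sum>a\<in>A. \<Sum>w\<in>W. \<Sum>b\<in>B. f a * g b * ((if padd a w = c then msgn n a w else 0) * D b w))"
    by (intro sum.cong refl) (simp add: assms(5) sum_distrib_left sum_distrib_right mult_ac)
  also have "\<dots> = (\<Sum>a\<in>A. \<Sum>b\<in>B. \<Sum>w\<in>W. f a * g b * ((if padd a w = c then msgn n a w else 0) * D b w))"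
    by (intro sum.cong refl) (rule sum.swap)
  also have "\<dots> = (\<Sum>a\<in>A. \<Sum>b\<in>B. f a * g b * (\<Sum>w\<in>W. (if padd a w = c then msgn n a w else 0) * D b w))"
    by (simp add: sum_distrib_left)
  finally show ?thesis .
qed


lemma dlin_leibniz:
  fixes M :: "'k::field mat"
  assumes f: "f \<in> OA n" and g: "g \<in> OA n" and h: "ohomog n p f"
  shows "dlin n M (omul n f g) = oadd (omul n (dlin n M f) g) (osmult ((-1)^p) (omul n f (dlin n M g)))"
proof (rule ext)
  fix c
  define A where "A = supp f"
  define B where "B = supp g"
  have fA: "finite A" and fB: "finite B" using f g by (auto simp: A_def B_def OA_def)
  define E where "E = (\<lambda>(a,b). padd a b) ` (A \<times> B)"
  have fE: "finite E" using fA fB by (simp add: E_def)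
  define R1 where "R1 a b = (\<Sum>i<n. \<Sum>j<n. if odd (a i) then (if padd (sh a i j) b = c then msgn n (sh a i j) b else 0) * ((-1)^(\<Sum>q<i. a q) * M$$(i,j)) else 0)" for a b
  define R2 where "R2 a b = (\<Sum>i<n. \<Sum>j<n. if odd (b i) then (if padd a (sh b i j) = c then msgn n a (sh b i j) else 0) * ((-1)^(\<Sum>q<i. b q) * M$$(i,j)) else 0)" for a b
  have 1: "dlin n M (omul n f g) c = (\<Sum>a\<in>A. \<Sum>b\<in>B. (msgn n a b * f a * g b) * Dm n M (padd a b) c)"
  proof -
    have "supp (omul n f g) \<subseteq> E" unfolding E_def A_def B_def by (rule supp_omul_sub)
    then have "dlin n M (omul n f g) c = (\<Sum>e\<in>E. omul n f g e * Dm n M e c)"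
      by (rule dlin_super[OF omul_OA[OF f g] fE])
    also have "\<dots> = (\<Sum>e\<in>E. (\<Sum>a\<in>A. \<Sum>b\<in>B. if padd a b = e then msgn n a b * f a * g b else 0) * Dm n M e c)"
      by (simp add: omul_def A_def B_def)
    also have "\<dots> = (\<Sum>a\<in>A. \<Sum>b\<in>B. (msgn n a b * f a * g b) * Dm n M (padd a b) c)"
      by (rule collapse_pairs[OF fE]) (auto simp: E_def)
    finally show ?thesis .
  qed
  have 2: "omul n (dlin n M f) g c = (\<Sum>a\<in>A. \<Sum>b\<in>B. f a * g b * R1 a b)"
  proof -
    have "omul n (dlin n M f) g c = (\<Sum>a\<in>A. \<Sum>b\<in>B. f a * g b * (\<Sum>u\<in>SH n A. (if padd u b = c then msgn n u b else 0) * Dm n M a u))"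
      by (rule omul_lin_left) (use fA fB supp_dlin[OF f] dlin_super[OF f fA] in \<open>auto simp: A_def B_def SH_finite\<close>)
    also have "\<dots> = (\<Sum>a\<in>A. \<Sum>b\<in>B. f a * g b * R1 a b)"
    proof (intro sum.cong refl arg_cong[where f="\<lambda>x. _ * x"])
      fix a b assume a: "a \<in> A"
      show "(\<Sum>u\<in>SH n A. (if padd u b = c then msgn n u b else 0) * Dm n M a u) = R1 a b"
        unfolding Dm_def R1_def
        by (rule sum_collapse) (use a fA SH_mem in \<open>auto simp: SH_finite\<close>)
    qed
    finally show ?thesis .
  qed
  have 3: "omul n f (dlin n M g) c = (\<Sum>a\<in>A. \<Sum>b\<in>B. f a * g b * R2 a b)"
  proof -
    have "omul n f (dlin n M g) c = (\<Sum>a\<in>A. \<Sum>b\<in>B. f a * g b * (\<Sum>w\<in>SH n B. (if padd a w = c then msgn n a w else 0) * Dm n M b w))"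
      by (rule omul_lin_right) (use fA fB supp_dlin[OF g] dlin_super[OF g fB] in \<open>auto simp: A_def B_def SH_finite\<close>)
    also have "\<dots> = (\<Sum>a\<in>A. \<Sum>b\<in>B. f a * g b * R2 a b)"
    proof (intro sum.cong refl arg_cong[where f="\<lambda>x. _ * x"])
      fix a b assume b: "b \<in> B"
      show "(\<Sum>w\<in>SH n B. (if padd a w = c then msgn n a w else 0) * Dm n M b w) = R2 a b"
        unfolding Dm_def R2_def
        by (rule sum_collapse) (use b fB SH_mem in \<open>auto simp: SH_finite\<close>)
    qed
    finally show ?thesis .
  qed
  have per: "msgn n a b * Dm n M (padd a b) c = R1 a b + (-1)^p * R2 a b" if a: "a \<in> A" for a b
  proof -
    have pa: "mdeg n a = p" using h a by (simp add: ohomog_def A_def)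
    have "msgn n a b * Dm n M (padd a b) c = (\<Sum>i<n. \<Sum>j<n. msgn n a b * (if odd (a i + b i) \<and> c = sh (padd a b) i j then (-1)^(\<Sum>q<i. a q + b q) * M$$(i,j) else 0))"
      by (simp add: Dm_def sum_distrib_left)
    also have "\<dots> = (\<Sum>i<n. \<Sum>j<n. (if odd (a i) then (if padd (sh a i j) b = c then msgn n (sh a i j) b else 0) * ((-1)^(\<Sum>q<i. a q) * M$$(i,j)) else 0)
        + (-1)^p * (if odd (b i) then (if padd a (sh b i j) = c then msgn n a (sh b i j) else 0) * ((-1)^(\<Sum>q<i. b q) * M$$(i,j)) else 0))"
      by (intro sum.cong refl) (rule term_id[OF _ _ pa], auto)
    also have "\<dots> = R1 a b + (-1)^p * R2 a b"
      by (simp add: R1_def R2_def sum.distrib sum_distrib_left)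
    finally show ?thesis .
  qed
  have "dlin n M (omul n f g) c = (\<Sum>a\<in>A. \<Sum>b\<in>B. f a * g b * R1 a b + (-1)^p * (f a * g b * R2 a b))"
    unfolding 1
  proof (intro sum.cong refl)
    fix a b assume "a \<in> A"
    then show "msgn n a b * f a * g b * Dm n M (padd a b) c = f a * g b * R1 a b + (-1)^p * (f a * g b * R2 a b)"
      using per[of a b] by (simp add: algebra_simps)
  qed
  also have "\<dots> = omul n (dlin n M f) g c + (-1)^p * omul n f (dlin n M g) c"
    unfolding 2 3 by (simp add: sum.distrib sum_distrib_left)
  finally show "dlin n M (omul n f g) c = oadd (omul n (dlin n M f) g) (osmult ((-1)^p) (omul n f (dlin n M g))) c"
    by (simp add: oadd_def osmult_def)
qed

lemma dlin_is_diff: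
  fixes M :: "'k::field mat"
  shows "is_diff n M (dlin n M)"
  unfolding is_diff_def
proof (intro conjI)
  show "\<forall>f\<in>OA n. dlin n M f \<in> OA n" using dlin_OA by blast
  show "\<forall>f. f \<notin> OA n \<longrightarrow> dlin n M f = ozero" using dlin_out by blast
  show "\<forall>f\<in>OA n. \<forall>g\<in>OA n. dlin n M (oadd f g) = oadd (dlin n M f) (dlin n M g)"
    using dlin_add by blast
  show "\<forall>c. \<forall>f\<in>OA n. dlin n M (osmult c f) = osmult c (dlin n M f)" using dlin_smult by blast
  show "\<forall>i<n. dlin n M (xgen i) = (\<lambda>a. \<Sum>j<n. M $$ (i, j) * omul n (xgen j) (xgen j) a)"
    using dlin_xgen by blast
  show "\<forall>p. \<forall>f\<in>OA n. \<forall>g\<in>OA n. ohomog n p f \<longrightarrow>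
      dlin n M (omul n f g) = oadd (omul n (dlin n M f) g) (osmult ((- 1) ^ p) (omul n f (dlin n M g)))"
    using dlin_leibniz by blast
qed


lemma msgn_zero_right: "msgn n a (\<lambda>_. 0) = 1"
  by (simp add: msgn_def)

lemma msgn_zero_left: "msgn n (\<lambda>_. 0) b = 1"
  by (simp add: msgn_def)

lemma omul_one_right:
  assumes x: "x \<in> OA n"
  shows "omul n x oone = x"
proof (rule ext)
  fix c
  have fx: "finite (supp x)" using x by (simp add: OA_def)
  have "omul n x oone c = (\<Sum>a\<in>supp x. \<Sum>b\<in>{\<lambda>_. 0}. if padd a b = c then msgn n a b * x a * oone b else 0)"
    by (rule omul_super) (use fx in \<open>auto simp: oone_def supp_def\<close>)
  also have "\<dots> = (\<Sum>a\<in>supp x. if padd a (\<lambda>_. 0) = c then msgn n a (\<lambda>_. 0) * x a * oone (\<lambda>_. 0) else 0)"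
    by simp
  also have "\<dots> = (\<Sum>a\<in>supp x. if a = c then x a else 0)"
    by (rule sum.cong) (auto simp: msgn_zero_right oone_def)
  also have "\<dots> = x c" using fx by (simp add: sum.delta' supp_def)
  finally show "omul n x oone c = x c" .
qed

lemma omul_one_left:
  assumes x: "x \<in> OA n"
  shows "omul n oone x = x"
proof (rule ext)
  fix c
  have fx: "finite (supp x)" using x by (simp add: OA_def)
  have "omul n oone x c = (\<Sum>a\<in>{\<lambda>_. 0}. \<Sum>b\<in>supp x. if padd a b = c then msgn n a b * oone a * x b else 0)"
    by (rule omul_super) (use fx in \<open>auto simp: oone_def supp_def\<close>)
  also have "\<dots> = (\<Sum>b\<in>supp x. if padd (\<lambda>_. 0) b = c then msgn n (\<lambda>_. 0) b * oone (\<lambda>_. 0) * x b else 0)"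
    by simp
  also have "\<dots> = (\<Sum>b\<in>supp x. if b = c then x b else 0)"
    by (rule sum.cong) (auto simp: msgn_zero_left oone_def)
  also have "\<dots> = x c" using fx by (simp add: sum.delta' supp_def)
  finally show "omul n oone x c = x c" .
qed

lemma is_diff_lin: "is_diff n M d \<Longrightarrow> lin_on n d"
  by (simp add: is_diff_def lin_on_def)

lemma ohomog_oone: "ohomog n 0 oone"
  by (simp add: ohomog_def oone_def supp_def mdeg_def)

lemma ohomog_xgen: "i < n \<Longrightarrow> ohomog n 1 (xgen i)"
  by (simp add: ohomog_def xgen_mon supp_mon mdeg_ee)

lemma is_diff_one:
  assumes d: "is_diff n M d"
  shows "d oone = ozero"
proof -
  have oo: "omul n oone oone = (oone :: (nat \<Rightarrow> nat) \<Rightarrow> 'a)" by (rule omul_one_left[OF oone_OA])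
  have dO: "d oone \<in> OA n" using d oone_OA unfolding is_diff_def by blast
  have "d (omul n oone oone) = oadd (omul n (d oone) oone) (osmult ((-1)^0) (omul n oone (d oone)))"
    using d oone_OA ohomog_oone unfolding is_diff_def by blast
  then have "d oone = oadd (d oone) (d oone)"
    unfolding oo omul_one_right[OF dO] omul_one_left[OF dO] by (simp add: osmult_def)
  then have "\<And>x. d oone x = d oone x + d oone x" unfolding oadd_def by metis
  then show ?thesis unfolding ozero_def by (metis add_cancel_right_right)
qed

lemma mdeg_zero: "a \<in> mons n \<Longrightarrow> mdeg n a = 0 \<Longrightarrow> a = (\<lambda>_. 0)"
  by (rule ext) (auto simp: mons_def mdeg_def not_less[symmetric])

lemma mon_decomp:
  assumes a: "a \<in> mons n" and i: "i < n" and ai: "a i \<noteq> 0" and lo: "\<forall>q<i. a q = 0"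
  shows "(mon a :: (nat \<Rightarrow> nat) \<Rightarrow> 'k::field) = omul n (xgen i) (mon (a(i := a i - 1)))"
proof -
  have p: "padd (ee i) (a(i := a i - 1)) = a" using ai by (auto simp: ee_def)
  have e0: "(\<Sum>p<n. \<Sum>q<p. ee i p * (a(i := a i - 1)) q) = 0"
    using lo by (auto simp: ee_def intro!: sum.neutral)
  have m: "msgn n (ee i) (a(i := a i - 1)) = (1::'k)" unfolding msgn_def e0 by simp
  show ?thesis unfolding xgen_mon omul_mon_mon p m by (simp add: mon_def)
qed

lemma is_diff_mon:
  assumes d1: "is_diff n M d1" and d2: "is_diff n M d2"
  shows "a \<in> mons n \<Longrightarrow> d1 (mon a) = d2 (mon a)"
proof (induction "mdeg n a" arbitrary: a)
  case 0
  then have "a = (\<lambda>_. 0)" using mdeg_zero by metis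
  then show ?case using is_diff_one[OF d1] is_diff_one[OF d2] by (simp add: oone_mon)
next
  case (Suc k)
  have "\<exists>i<n. a i \<noteq> 0"
  proof (rule ccontr)
    assume "\<not> ?thesis"
    then have "mdeg n a = 0" by (simp add: mdeg_def)
    then show False using Suc by simp
  qed
  then have ex: "\<exists>i. i < n \<and> a i \<noteq> 0" by blast
  define i where "i = (LEAST i. i < n \<and> a i \<noteq> 0)"
  have i: "i < n" "a i \<noteq> 0" using LeastI_ex[OF ex] by (simp_all add: i_def)
  have lo: "\<forall>q<i. a q = 0"
  proof (intro allI impI)
    fix q assume "q < i"
    then have "\<not> (q < n \<and> a q \<noteq> 0)" unfolding i_def by (rule not_less_Least)
    then show "a q = 0" using \<open>q < i\<close> i by auto
  qed
  define a' where "a' = a(i := a i - 1)"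
  have a'm: "a' \<in> mons n" using Suc.prems i by (auto simp: a'_def mons_def)
  have "mdeg n a = mdeg n a' + 1"
  proof -
    have "mdeg n a = (\<Sum>q<n. a' q + (if q = i then 1 else 0))"
      unfolding mdeg_def by (rule sum.cong) (use i in \<open>auto simp: a'_def\<close>)
    also have "\<dots> = mdeg n a' + 1" using i by (simp add: sum.distrib mdeg_def)
    finally show ?thesis .
  qed
  then have ka: "k = mdeg n a'" using Suc by simp
  have IH: "d1 (mon a') = d2 (mon a')" using Suc.hyps(1)[OF ka a'm] .
  have dec: "mon a = omul n (xgen i) (mon a')"
    unfolding a'_def by (rule mon_decomp[OF Suc.prems i lo])
  have xi: "xgen i \<in> OA n" using xgen_OA[OF i(1)] .
  have ma: "mon a' \<in> OA n" using mon_OA[OF a'm] .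
  have L1: "d1 (mon a) = oadd (omul n (d1 (xgen i)) (mon a')) (osmult ((-1)^1) (omul n (xgen i) (d1 (mon a'))))"
    unfolding dec using d1 xi ma ohomog_xgen[OF i(1)] unfolding is_diff_def by blast
  have L2: "d2 (mon a) = oadd (omul n (d2 (xgen i)) (mon a')) (osmult ((-1)^1) (omul n (xgen i) (d2 (mon a'))))"
    unfolding dec using d2 xi ma ohomog_xgen[OF i(1)] unfolding is_diff_def by blast
  have "d1 (xgen i) = d2 (xgen i)" using d1 d2 i unfolding is_diff_def by simp
  then show ?case using L1 L2 IH by simp
qed

lemma OA_expand:
  assumes f: "f \<in> OA n"
  shows "f = (\<lambda>c. \<Sum>a\<in>supp f. f a * mon a c)"
proof (rule ext)
  fix c
  have fx: "finite (supp f)" using f by (simp add: OA_def)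
  have "(\<Sum>a\<in>supp f. f a * mon a c) = (\<Sum>a\<in>supp f. if c = a then f a else 0)"
    by (rule sum.cong) (auto simp: mon_def)
  also have "\<dots> = f c" using fx by (simp add: sum.delta supp_def)
  finally show "f c = (\<Sum>a\<in>supp f. f a * mon a c)" by simp
qed

lemma is_diff_unique:
  assumes d1: "is_diff n M d1" and d2: "is_diff n M d2"
  shows "d1 = d2"
proof (rule ext)
  fix f
  show "d1 f = d2 f"
  proof (cases "f \<in> OA n")
    case False
    then show ?thesis using d1 d2 unfolding is_diff_def by simp
  next
    case True
    have fx: "finite (supp f)" and sm: "supp f \<subseteq> mons n" using True by (auto simp: OA_def)
    have mO: "\<And>a. a \<in> supp f \<Longrightarrow> mon a \<in> OA n" using sm mon_OA by blast
    have "d1 f = d1 (\<lambda>c. \<Sum>a\<in>supp f. f a * mon a c)" using OA_expand[OF True] by simp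
    also have "\<dots> = (\<lambda>c. \<Sum>a\<in>supp f. f a * d1 (mon a) c)"
      by (rule lin_sum[OF is_diff_lin[OF d1] fx mO])
    also have "\<dots> = (\<lambda>c. \<Sum>a\<in>supp f. f a * d2 (mon a) c)"
    proof -
      have eqm: "\<And>a. a \<in> supp f \<Longrightarrow> d1 (mon a) = d2 (mon a)" using is_diff_mon[OF d1 d2] sm by blast
      show ?thesis by (intro ext sum.cong refl) (simp add: eqm)
    qed
    also have "\<dots> = d2 (\<lambda>c. \<Sum>a\<in>supp f. f a * mon a c)"
      by (rule lin_sum[OF is_diff_lin[OF d2] fx mO, symmetric])
    also have "\<dots> = d2 f" using OA_expand[OF True] by simp
    finally show ?thesis .
  qed
qed

lemma dga_diff_eq:
  fixes M :: "'k::field mat"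
  shows "dga_diff n M = dlin n M"
  unfolding dga_diff_def
proof (rule the_equality)
  show "is_diff n M (dlin n M)" by (rule dlin_is_diff)
  fix d assume "is_diff n M d"
  then show "d = dlin n M" by (rule is_diff_unique[OF _ dlin_is_diff])
qed

lemma dga_diff_is: "is_diff n M (dga_diff n M)"
  by (simp add: dga_diff_eq dlin_is_diff)


lemma gi_lin: "graded_alg_iso n \<phi> \<Longrightarrow> lin_on n \<phi>"
  by (simp add: graded_alg_iso_def lin_on_def)

lemma gi_OA: "graded_alg_iso n \<phi> \<Longrightarrow> f \<in> OA n \<Longrightarrow> \<phi> f \<in> OA n"
  unfolding graded_alg_iso_def bij_betw_def by blast

lemma gi_inj: "graded_alg_iso n \<phi> \<Longrightarrow> inj_on \<phi> (OA n)"
  unfolding graded_alg_iso_def bij_betw_def by blast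

lemma gi_mul: "graded_alg_iso n \<phi> \<Longrightarrow> f \<in> OA n \<Longrightarrow> g \<in> OA n \<Longrightarrow> \<phi> (omul n f g) = omul n (\<phi> f) (\<phi> g)"
  unfolding graded_alg_iso_def by blast

lemma gi_add: "graded_alg_iso n \<phi> \<Longrightarrow> f \<in> OA n \<Longrightarrow> g \<in> OA n \<Longrightarrow> \<phi> (oadd f g) = oadd (\<phi> f) (\<phi> g)"
  unfolding graded_alg_iso_def by blast

lemma gi_hom: "graded_alg_iso n \<phi> \<Longrightarrow> f \<in> OA n \<Longrightarrow> ohomog n d f \<Longrightarrow> ohomog n d (\<phi> f)"
  unfolding graded_alg_iso_def by blast

lemma mult_entry:
  assumes "A \<in> carrier_mat n n" "B \<in> carrier_mat n n" "i < n" "j < n"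
  shows "(A * B) $$ (i, j) = (\<Sum>t<n. A $$ (i, t) * B $$ (t, j))"
  using assms by (simp add: scalar_prod_def atLeast0LessThan)

lemma ee_inj: "ee j = ee l \<Longrightarrow> j = l"
  by (metis ee_apply zero_neq_one)

definition tm :: "nat \<Rightarrow> nat \<Rightarrow> nat" where "tm m = (\<lambda>t. 2 * ee m t)"

lemma tm_inj: "tm j = tm l \<Longrightarrow> j = l"
  unfolding tm_def by (metis ee_apply mult_cancel_left zero_neq_numeral zero_neq_one)

lemma padd_ee_tm: "padd (ee j) (ee l) = tm m \<longleftrightarrow> j = m \<and> l = m"
proof
  assume h: "padd (ee j) (ee l) = tm m"
  then have "ee j m + ee l m = 2" unfolding tm_def by (metis ee_apply mult_2 one_add_one)
  then show "j = m \<and> l = m" by (auto simp: ee_apply split: if_splits)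
next
  assume "j = m \<and> l = m"
  then show "padd (ee j) (ee l) = tm m" by (auto simp: tm_def)
qed

lemma deg1:
  assumes a: "a \<in> mons n" and d: "mdeg n a = 1"
  shows "\<exists>j<n. a = ee j"
proof -
  have "\<exists>j<n. a j \<noteq> 0"
  proof (rule ccontr)
    assume "\<not> ?thesis" then have "mdeg n a = 0" by (simp add: mdeg_def)
    then show False using d by simp
  qed
  then obtain j where j: "j < n" "a j \<noteq> 0" by blast
  have "(\<Sum>q<n. a q) = a j + (\<Sum>q\<in>{..<n} - {j}. a q)"
    using j by (simp add: sum.remove)
  then have s: "a j + (\<Sum>q\<in>{..<n} - {j}. a q) = 1" using d by (simp add: mdeg_def)
  then have aj: "a j = 1" using j by simp
  then have "(\<Sum>q\<in>{..<n} - {j}. a q) = 0" using s by simp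
  then have z: "\<And>q. q < n \<Longrightarrow> q \<noteq> j \<Longrightarrow> a q = 0" by simp
  have "a = ee j"
  proof (rule ext)
    fix q show "a q = ee j q"
      using z[of q] aj a by (cases "q < n") (auto simp: ee_apply mons_def)
  qed
  then show ?thesis using j by blast
qed

lemma sq_at_tm: "omul n (xgen l) (xgen l) (tm m) = (if l = m then 1 else (0::'k::field))"
  unfolding sq_ee using tm_inj by (auto simp: mon_def tm_def[symmetric])

lemma deg1_form:
  assumes g: "g \<in> OA n" and h: "ohomog n 1 g"
  shows "g = (\<lambda>a. \<Sum>j<n. g (ee j) * xgen j a)"
proof (rule ext)
  fix a
  show "g a = (\<Sum>j<n. g (ee j) * xgen j a)"
  proof (cases "\<exists>j<n. a = ee j")
    case True
    then obtain j0 where j0: "j0 < n" "a = ee j0" by blast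
    have "(\<Sum>j<n. g (ee j) * xgen j a) = (\<Sum>j<n. if j = j0 then g (ee j) else 0)"
      by (rule sum.cong) (use j0 ee_inj in \<open>auto simp: xgen_mon mon_def\<close>)
    then show ?thesis using j0 by simp
  next
    case False
    have "a \<notin> supp g"
    proof
      assume as: "a \<in> supp g"
      then have "a \<in> mons n" "mdeg n a = 1" using g h by (auto simp: ohomog_def OA_def)
      then show False using deg1 False by blast
    qed
    then have "g a = 0" by (simp add: supp_def)
    moreover have "(\<Sum>j<n. g (ee j) * xgen j a) = 0"
      by (rule sum.neutral) (use False in \<open>auto simp: xgen_mon mon_def\<close>)
    ultimately show ?thesis by simp
  qed
qed

lemma deg1_prod:
  assumes g: "g \<in> OA n" "ohomog n 1 g" and k: "k \<in> OA n" "ohomog n 1 k" and m: "m < n"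
  shows "omul n g k (tm m) = g (ee m) * (k (ee m) :: 'k::field)"
proof -
  have sub: "\<And>f. f \<in> OA n \<Longrightarrow> ohomog n 1 f \<Longrightarrow> supp f \<subseteq> ee ` {..<n}"
    using deg1 by (force simp: ohomog_def OA_def)
  have "omul n g k (tm m) = (\<Sum>a\<in>ee ` {..<n}. \<Sum>b\<in>ee ` {..<n}. if padd a b = tm m then msgn n a b * g a * k b else 0)"
    by (rule omul_super) (use sub g k in auto)
  also have "\<dots> = (\<Sum>j<n. \<Sum>l<n. if padd (ee j) (ee l) = tm m then msgn n (ee j) (ee l) * g (ee j) * k (ee l) else 0)"
  proof -
    have inj: "inj_on ee {..<n}" by (meson ee_inj inj_onI)
    show ?thesis by (simp add: sum.reindex[OF inj])
  qed
  also have "\<dots> = (\<Sum>j<n. \<Sum>l<n. if j = m \<and> l = m then g (ee m) * k (ee m) else 0)"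
    by (intro sum.cong refl) (auto simp: padd_ee_tm msgn_ee_ee)
  also have "\<dots> = g (ee m) * k (ee m)" using m by (simp add: sum_delta2)
  finally show ?thesis .
qed

lemma anticomm:
  assumes "i \<noteq> k" "i < n" "k < n"
  shows "oadd (omul n (xgen i) (xgen k)) (omul n (xgen k) (xgen i)) = (ozero :: (nat \<Rightarrow> nat) \<Rightarrow> 'k::field)"
proof -
  have p: "padd (ee k) (ee i) = padd (ee i) (ee k)" by auto
  have "msgn n (ee i) (ee k) + msgn n (ee k) (ee i) = (0::'k)"
    using assms by (auto simp: msgn_ee_ee)
  then show ?thesis unfolding xgen_mon omul_mon_mon p
    by (auto simp: oadd_def ozero_def fun_eq_iff)
qed


definition perm_of :: "nat \<Rightarrow> (nat \<Rightarrow> nat \<Rightarrow> 'k::field) \<Rightarrow> (nat \<Rightarrow> nat) \<Rightarrow> bool" where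
  "perm_of n cc \<sigma> = ((\<forall>i<n. \<sigma> i < n) \<and> inj_on \<sigma> {..<n} \<and> \<sigma> ` {..<n} = {..<n}
      \<and> (\<forall>i<n. \<forall>j<n. cc i j \<noteq> 0 \<longleftrightarrow> j = \<sigma> i))"

lemma qp_perm:
  fixes cc :: "nat \<Rightarrow> nat \<Rightarrow> 'k::field"
  assumes rows: "\<forall>i<n. \<exists>j<n. cc i j \<noteq> 0"
    and disj: "\<forall>i<n. \<forall>k<n. \<forall>j<n. i \<noteq> k \<longrightarrow> cc i j * cc k j = 0"
  shows "\<exists>\<sigma>. perm_of n cc \<sigma>"
proof -
  define \<sigma> where "\<sigma> i = (SOME j. j < n \<and> cc i j \<noteq> 0)" for i
  have s: "\<sigma> i < n \<and> cc i (\<sigma> i) \<noteq> 0" if "i < n" for i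
    unfolding \<sigma>_def by (rule someI_ex) (use rows that in blast)
  have inj: "inj_on \<sigma> {..<n}"
  proof (rule inj_onI)
    fix i k assume i: "i \<in> {..<n}" and k: "k \<in> {..<n}" and e: "\<sigma> i = \<sigma> k"
    show "i = k"
    proof (rule ccontr)
      assume "i \<noteq> k"
      then have "cc i (\<sigma> k) * cc k (\<sigma> k) = 0" using disj i k s by auto
      then show False using s[of i] s[of k] i k e by auto
    qed
  qed
  have im: "\<sigma> ` {..<n} = {..<n}"
    by (rule endo_inj_surj) (use s inj in auto)
  have iff: "cc i j \<noteq> 0 \<longleftrightarrow> j = \<sigma> i" if i: "i < n" and j: "j < n" for i j
  proof
    assume nz: "cc i j \<noteq> 0"
    obtain k where k: "k < n" "j = \<sigma> k" using im j by (metis imageE lessThan_iff)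
    have "k = i"
    proof (rule ccontr)
      assume "k \<noteq> i"
      then have "cc i j * cc k j = 0" using disj i k j by auto
      then show False using nz s[of k] k by auto
    qed
    then show "j = \<sigma> i" using k by simp
  next
    assume "j = \<sigma> i" then show "cc i j \<noteq> 0" using s i by simp
  qed
  show ?thesis unfolding perm_of_def using s inj im iff by blast
qed

lemma qp_mats:
  fixes cc :: "nat \<Rightarrow> nat \<Rightarrow> 'k::field"
  assumes P: "perm_of n cc \<sigma>"
  defines "C \<equiv> mat n n (\<lambda>(i,j). cc i j)"
    and "D \<equiv> mat n n (\<lambda>(j,i). if j = \<sigma> i then inverse (cc i j) else 0)"
  shows "C \<in> QPL n" "D \<in> carrier_mat n n" "C * D = 1\<^sub>m n" "D * C = 1\<^sub>m n"
proof -
  have sl: "\<And>i. i < n \<Longrightarrow> \<sigma> i < n" and inj: "inj_on \<sigma> {..<n}" and im: "\<sigma> ` {..<n} = {..<n}"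
    and iff: "\<And>i j. i < n \<Longrightarrow> j < n \<Longrightarrow> cc i j \<noteq> 0 \<longleftrightarrow> j = \<sigma> i"
    using P unfolding perm_of_def by blast+
  have Cc: "C \<in> carrier_mat n n" and Dc: "D \<in> carrier_mat n n" by (simp_all add: C_def D_def)
  show "D \<in> carrier_mat n n" by (rule Dc)
  have pre: "\<And>r. r < n \<Longrightarrow> \<exists>t<n. \<sigma> t = r" using im by (metis imageE lessThan_iff)
  show CD: "C * D = 1\<^sub>m n"
  proof (rule eq_matI)
    fix i k assume i: "i < dim_row (1\<^sub>m n :: 'k mat)" and k: "k < dim_col (1\<^sub>m n :: 'k mat)"
    then have i: "i < n" and k: "k < n" by auto
    have "(C * D) $$ (i, k) = (\<Sum>t<n. cc i t * (if t = \<sigma> k then inverse (cc k t) else 0))"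
      unfolding mult_entry[OF Cc Dc i k] using i k by (intro sum.cong) (auto simp: C_def D_def)
    also have "\<dots> = (\<Sum>t<n. if t = \<sigma> k then cc i t * inverse (cc k t) else 0)"
      by (rule sum.cong) auto
    also have "\<dots> = cc i (\<sigma> k) * inverse (cc k (\<sigma> k))" using sl[OF k] by (simp add: sum.delta)
    also have "\<dots> = (if i = k then 1 else 0)"
    proof (cases "i = k")
      case True then show ?thesis using iff[OF k sl[OF k]] by simp
    next
      case False
      then have "\<sigma> k \<noteq> \<sigma> i" using inj i k by (auto dest: inj_onD)
      then have "cc i (\<sigma> k) = 0" using iff[OF i sl[OF k]] by simp
      then show ?thesis using False by simp
    qed
    finally show "(C * D) $$ (i, k) = 1\<^sub>m n $$ (i, k)" using i k by simp
  qed (simp_all add: C_def D_def)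
  show DC: "D * C = 1\<^sub>m n"
  proof (rule eq_matI)
    fix r s assume r: "r < dim_row (1\<^sub>m n :: 'k mat)" and s: "s < dim_col (1\<^sub>m n :: 'k mat)"
    then have r: "r < n" and s: "s < n" by auto
    obtain t0 where t0: "t0 < n" "\<sigma> t0 = r" using pre[OF r] by blast
    have "(D * C) $$ (r, s) = (\<Sum>t<n. (if r = \<sigma> t then inverse (cc t r) else 0) * cc t s)"
      unfolding mult_entry[OF Dc Cc r s] using r s by (intro sum.cong) (auto simp: C_def D_def)
    also have "\<dots> = (\<Sum>t<n. if t = t0 then inverse (cc t r) * cc t s else 0)"
    proof (rule sum.cong[OF refl])
      fix t assume t: "t \<in> {..<n}"
      have "r = \<sigma> t \<longleftrightarrow> t = t0" using inj t t0 by (auto dest: inj_onD)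
      then show "(if r = \<sigma> t then inverse (cc t r) else 0) * cc t s = (if t = t0 then inverse (cc t r) * cc t s else 0)"
        by simp
    qed
    also have "\<dots> = inverse (cc t0 r) * cc t0 s" using t0 by (simp add: sum.delta)
    also have "\<dots> = (if r = s then 1 else 0)"
    proof (cases "r = s")
      case True then show ?thesis using iff[OF t0(1) r] t0 by simp
    next
      case False
      then have "cc t0 s = 0" using iff[OF t0(1) s] t0 by simp
      then show ?thesis using False by simp
    qed
    finally show "(D * C) $$ (r, s) = 1\<^sub>m n $$ (r, s)" using r s by simp
  qed (simp_all add: C_def D_def)
  have inv: "invertible_mat C"
    unfolding invertible_mat_def inverts_mat_def using Cc Dc CD DC
  proof (intro conjI exI)
    show "square_mat C" using Cc by auto
    show "C * D = 1\<^sub>m (dim_row C)" using CD Cc by auto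
    show "D * C = 1\<^sub>m (dim_row D)" using DC Dc by auto
  qed
  have rowu: "\<forall>i<n. \<exists>!j. j < n \<and> C $$ (i, j) \<noteq> 0"
  proof (intro allI impI)
    fix i assume i: "i < n"
    show "\<exists>!j. j < n \<and> C $$ (i, j) \<noteq> 0"
      by (rule ex1I[of _ "\<sigma> i"]) (use i sl iff in \<open>auto simp: C_def\<close>)
  qed
  have colu: "\<forall>j<n. \<exists>!i. i < n \<and> C $$ (i, j) \<noteq> 0"
  proof (intro allI impI)
    fix j assume j: "j < n"
    obtain t0 where t0: "t0 < n" "\<sigma> t0 = j" using pre[OF j] by blast
    show "\<exists>!i. i < n \<and> C $$ (i, j) \<noteq> 0"
    proof (rule ex1I[of _ t0])
      show "t0 < n \<and> C $$ (t0, j) \<noteq> 0" using t0 iff[OF t0(1) j] j by (simp add: C_def)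
    next
      fix i assume "i < n \<and> C $$ (i, j) \<noteq> 0"
      then have "i < n" "\<sigma> i = j" using iff j by (auto simp: C_def)
      then show "i = t0" using t0 inj by (auto dest: inj_onD)
    qed
  qed
  show "C \<in> QPL n" unfolding QPL_def using Cc inv rowu colu by blast
qed


lemma diff_xgen: "i < n \<Longrightarrow> dga_diff n M (xgen i) = (\<lambda>a. \<Sum>j<n. M $$ (i, j) * omul n (xgen j) (xgen j) a)"
  using dga_diff_is[of n M] unfolding is_diff_def by blast

lemma forward:
  fixes M M' :: "'k::field_char_0 mat"
  assumes M: "M \<in> carrier_mat n n" and M': "M' \<in> carrier_mat n n" and iso: "dga_isomorphic n M M'"
  shows "\<exists>C\<in>QPL n. \<exists>D\<in>carrier_mat n n. C * D = 1\<^sub>m n \<and> D * C = 1\<^sub>m n \<and> M' = D * M * map_mat (\<lambda>c. c ^ 2) C"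
proof -
  obtain \<phi> where gi: "graded_alg_iso n \<phi>" and cm: "\<forall>f\<in>OA n. \<phi> (dga_diff n M f) = dga_diff n M' (\<phi> f)"
    using iso unfolding dga_isomorphic_def by blast
  define g where "g i = \<phi> (xgen i)" for i
  define cc where "cc i j = g i (ee j)" for i j
  have gO: "g i \<in> OA n" if "i < n" for i using gi_OA[OF gi xgen_OA[OF that]] by (simp add: g_def)
  have gH: "ohomog n 1 (g i)" if "i < n" for i
    using gi_hom[OF gi xgen_OA[OF that] ohomog_xgen[OF that]] by (simp add: g_def)
  have gform: "g i = (\<lambda>a. \<Sum>j<n. cc i j * xgen j a)" if "i < n" for i
    unfolding cc_def by (rule deg1_form[OF gO[OF that] gH[OF that]])
  have prod: "omul n (g i) (g k) (tm m) = cc i m * cc k m" if "i < n" "k < n" "m < n" for i k m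
    unfolding cc_def by (rule deg1_prod) (use that gO gH in auto)
  have z: "\<phi> ozero = ozero" by (rule lin_zero[OF gi_lin[OF gi]])
  have disj: "\<forall>i<n. \<forall>k<n. \<forall>j<n. i \<noteq> k \<longrightarrow> cc i j * cc k j = 0"
  proof (intro allI impI)
    fix i k j assume i: "i < n" and k: "k < n" and j: "j < n" and ik: "i \<noteq> k"
    have "oadd (omul n (xgen i) (xgen k)) (omul n (xgen k) (xgen i)) = (ozero :: (nat \<Rightarrow> nat) \<Rightarrow> 'k)"
      by (rule anticomm[OF ik i k])
    then have "\<phi> (oadd (omul n (xgen i) (xgen k)) (omul n (xgen k) (xgen i))) = ozero"
      using z by simp
    moreover have "\<phi> (oadd (omul n (xgen i) (xgen k)) (omul n (xgen k) (xgen i)))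
        = oadd (omul n (g i) (g k)) (omul n (g k) (g i))"
      using gi_add[OF gi omul_OA[OF xgen_OA[OF i] xgen_OA[OF k]] omul_OA[OF xgen_OA[OF k] xgen_OA[OF i]]]
        gi_mul[OF gi xgen_OA[OF i] xgen_OA[OF k]] gi_mul[OF gi xgen_OA[OF k] xgen_OA[OF i]]
      by (simp add: g_def)
    ultimately have "oadd (omul n (g i) (g k)) (omul n (g k) (g i)) (tm j) = 0"
      by (simp add: ozero_def)
    then have "cc i j * cc k j + cc k j * cc i j = 0"
      using prod[OF i k j] prod[OF k i j] by (simp add: oadd_def)
    moreover have "cc k j * cc i j = cc i j * cc k j" by (rule mult.commute)
    ultimately have h: "cc i j * cc k j + cc i j * cc k j = 0" by simp
    have "2 * (cc i j * cc k j) = 0" by (subst mult_2) (rule h)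
    then show "cc i j * cc k j = 0" by simp
  qed
  have rows: "\<forall>i<n. \<exists>j<n. cc i j \<noteq> 0"
  proof (intro allI impI)
    fix i assume i: "i < n"
    show "\<exists>j<n. cc i j \<noteq> 0"
    proof (rule ccontr)
      assume "\<not> ?thesis"
      then have "g i = ozero" using gform[OF i] by (simp add: ozero_def)
      then have "\<phi> (xgen i) = \<phi> ozero" using z by (simp add: g_def)
      then have "(xgen i :: (nat \<Rightarrow> nat) \<Rightarrow> 'k) = ozero"
        by (rule inj_onD[OF gi_inj[OF gi] _ xgen_OA[OF i] ozero_OA])
      then have "(xgen i :: (nat \<Rightarrow> nat) \<Rightarrow> 'k) (ee i) = ozero (ee i)" by simp
      then show False by (simp add: xgen_mon mon_def ozero_def)
    qed
  qed
  obtain \<sigma> where P: "perm_of n cc \<sigma>" using qp_perm[OF rows disj] by blast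
  define C where "C = mat n n (\<lambda>(i,j). cc i j)"
  define D where "D = mat n n (\<lambda>(j,i). if j = \<sigma> i then inverse (cc i j) else 0)"
  have CQ: "C \<in> QPL n" and Dc: "D \<in> carrier_mat n n" and CD: "C * D = 1\<^sub>m n" and DC: "D * C = 1\<^sub>m n"
    using qp_mats[OF P] unfolding C_def D_def by blast+
  have Cc: "C \<in> carrier_mat n n" by (simp add: C_def)
  define C2 where "C2 = map_mat (\<lambda>c. c ^ 2) C"
  have C2c: "C2 \<in> carrier_mat n n" using Cc by (simp add: C2_def)
  have sqO: "\<And>j. j < n \<Longrightarrow> omul n (xgen j) (xgen j) \<in> OA n" using omul_OA xgen_OA by blast
  have key: "(M * C2) $$ (i, m) = (C * M') $$ (i, m)" if i: "i < n" and m: "m < n" for i m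
  proof -
    have "\<phi> (dga_diff n M (xgen i)) = \<phi> (\<lambda>a. \<Sum>j<n. M $$ (i, j) * omul n (xgen j) (xgen j) a)"
      by (simp add: diff_xgen[OF i])
    also have "\<dots> = (\<lambda>a. \<Sum>j<n. M $$ (i, j) * \<phi> (omul n (xgen j) (xgen j)) a)"
      by (rule lin_sum[OF gi_lin[OF gi]]) (auto intro: sqO)
    also have "\<dots> = (\<lambda>a. \<Sum>j<n. M $$ (i, j) * omul n (g j) (g j) a)"
      by (intro ext sum.cong refl) (simp add: gi_mul[OF gi xgen_OA xgen_OA] g_def)
    finally have L: "\<phi> (dga_diff n M (xgen i)) (tm m) = (\<Sum>j<n. M $$ (i, j) * (cc j m * cc j m))"
      using prod m by simp
    have "dga_diff n M' (g i) = dga_diff n M' (\<lambda>a. \<Sum>j<n. cc i j * xgen j a)"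
      using gform[OF i] by simp
    also have "\<dots> = (\<lambda>a. \<Sum>j<n. cc i j * dga_diff n M' (xgen j) a)"
      by (rule lin_sum[OF is_diff_lin[OF dga_diff_is]]) (auto intro: xgen_OA)
    finally have R: "dga_diff n M' (g i) (tm m) = (\<Sum>j<n. cc i j * (\<Sum>l<n. M' $$ (j, l) * omul n (xgen l) (xgen l) (tm m)))"
      by (simp add: diff_xgen)
    have R2: "dga_diff n M' (g i) (tm m) = (\<Sum>j<n. cc i j * M' $$ (j, m))"
      unfolding R sq_at_tm using m by (simp add: sum.delta if_distrib[of "\<lambda>x. _ * x"] cong: if_cong)
    have "\<phi> (dga_diff n M (xgen i)) = dga_diff n M' (g i)"
      using cm xgen_OA[OF i] unfolding g_def by blast
    then have "(\<Sum>j<n. M $$ (i, j) * (cc j m * cc j m)) = (\<Sum>j<n. cc i j * M' $$ (j, m))"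
      using L R2 by simp
    moreover have "(M * C2) $$ (i, m) = (\<Sum>j<n. M $$ (i, j) * (cc j m * cc j m))"
      unfolding mult_entry[OF M C2c i m] using m Cc
      by (intro sum.cong refl) (simp add: C2_def C_def power2_eq_square)
    moreover have "(C * M') $$ (i, m) = (\<Sum>j<n. cc i j * M' $$ (j, m))"
      unfolding mult_entry[OF Cc M' i m] using i
      by (intro sum.cong refl) (simp add: C_def)
    ultimately show ?thesis by simp
  qed
  have MC: "M * C2 = C * M'"
    by (rule eq_matI) (use key M M' Cc C2c in auto)
  have "D * M * C2 = D * (M * C2)" using Dc M C2c by simp
  also have "\<dots> = D * (C * M')" by (simp add: MC)
  also have "\<dots> = (D * C) * M'" using Dc Cc M' by simp
  also have "\<dots> = M'" using DC M' by simp
  finally show ?thesis using CQ Dc CD DC unfolding C2_def by metis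
qed


abbreviation pinv :: "(nat \<Rightarrow> nat) \<Rightarrow> nat \<Rightarrow> nat" where "pinv s \<equiv> inv_into UNIV s"

definition Inv :: "nat \<Rightarrow> (nat\<Rightarrow>nat) \<Rightarrow> (nat\<Rightarrow>nat) \<Rightarrow> (nat\<Rightarrow>nat) \<Rightarrow> nat" where
  "Inv n s x y = (\<Sum>p<n. \<Sum>q<n. if p < q \<and> s q < s p then x p * y q else 0)"

definition wt :: "nat \<Rightarrow> (nat\<Rightarrow>'k) \<Rightarrow> (nat\<Rightarrow>nat) \<Rightarrow> (nat\<Rightarrow>nat) \<Rightarrow> 'k::field" where
  "wt n cs s a = (\<Prod>i<n. cs i ^ a i) * (-1)^(Inv n s a a)"

definition phiM :: "nat \<Rightarrow> (nat\<Rightarrow>'k) \<Rightarrow> (nat\<Rightarrow>nat) \<Rightarrow> ((nat\<Rightarrow>nat)\<Rightarrow>'k::field) \<Rightarrow> ((nat\<Rightarrow>nat)\<Rightarrow>'k)" where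
  "phiM n cs s f = (\<lambda>c. wt n cs s (c \<circ> s) * f (c \<circ> s))"

definition phiI :: "nat \<Rightarrow> (nat\<Rightarrow>'k) \<Rightarrow> (nat\<Rightarrow>nat) \<Rightarrow> ((nat\<Rightarrow>nat)\<Rightarrow>'k::field) \<Rightarrow> ((nat\<Rightarrow>nat)\<Rightarrow>'k)" where
  "phiI n cs s f = (\<lambda>a. f (a \<circ> pinv s) / wt n cs s a)"

lemma comp_inv1: "s permutes S \<Longrightarrow> (c \<circ> s) \<circ> pinv s = c"
  by (rule ext) (simp add: permutes_inverses)

lemma comp_inv2: "s permutes S \<Longrightarrow> (c \<circ> pinv s) \<circ> s = c"
  by (rule ext) (simp add: permutes_inverses)

lemma mons_comp: "s permutes {..<n} \<Longrightarrow> a \<in> mons n \<Longrightarrow> a \<circ> s \<in> mons n"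
  by (auto simp: mons_def permutes_not_in)

lemma mons_comp_inv: "s permutes {..<n} \<Longrightarrow> a \<in> mons n \<Longrightarrow> a \<circ> pinv s \<in> mons n"
  using mons_comp permutes_inv by blast

lemma mdeg_comp: "s permutes {..<n} \<Longrightarrow> mdeg n (a \<circ> s) = mdeg n a"
  unfolding mdeg_def by (metis sum.permute comp_def)

lemma wt_nz:
  assumes "\<forall>i<n. cs i \<noteq> (0::'k::field)"
  shows "wt n cs s a \<noteq> 0"
  using assms by (simp add: wt_def)

lemma phiI_phiM:
  assumes s: "s permutes {..<n}" and cs: "\<forall>i<n. cs i \<noteq> (0::'k::field)"
  shows "phiI n cs s (phiM n cs s f) = f"
  by (rule ext) (simp add: phiI_def phiM_def comp_inv2[OF s] wt_nz[OF cs])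

lemma phiM_phiI:
  assumes s: "s permutes {..<n}" and cs: "\<forall>i<n. cs i \<noteq> (0::'k::field)"
  shows "phiM n cs s (phiI n cs s f) = f"
  by (rule ext) (simp add: phiI_def phiM_def comp_inv1[OF s] wt_nz[OF cs])

lemma phiM_OA:
  assumes s: "s permutes {..<n}" and f: "f \<in> OA n"
  shows "phiM n cs s f \<in> OA n"
proof -
  have "supp (phiM n cs s f) \<subseteq> (\<lambda>a. a \<circ> pinv s) ` supp f"
  proof
    fix c assume "c \<in> supp (phiM n cs s f)"
    then have "c \<circ> s \<in> supp f" by (auto simp: supp_def phiM_def)
    moreover have "c = (c \<circ> s) \<circ> pinv s" by (rule comp_inv1[OF s, symmetric])
    ultimately show "c \<in> (\<lambda>a. a \<circ> pinv s) ` supp f" by blast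
  qed
  moreover have "finite ((\<lambda>a. a \<circ> pinv s) ` supp f)" using f by (simp add: OA_def)
  moreover have "(\<lambda>a. a \<circ> pinv s) ` supp f \<subseteq> mons n" using f mons_comp_inv[OF s] by (auto simp: OA_def)
  ultimately show ?thesis unfolding OA_def by (auto intro: finite_subset)
qed

lemma phiI_OA:
  assumes s: "s permutes {..<n}" and f: "f \<in> OA n"
  shows "phiI n cs s f \<in> OA n"
proof -
  have "supp (phiI n cs s f) \<subseteq> (\<lambda>a. a \<circ> s) ` supp f"
  proof
    fix c assume "c \<in> supp (phiI n cs s f)"
    then have "c \<circ> pinv s \<in> supp f" by (auto simp: supp_def phiI_def)
    moreover have "c = (c \<circ> pinv s) \<circ> s" by (rule comp_inv2[OF s, symmetric])
    ultimately show "c \<in> (\<lambda>a. a \<circ> s) ` supp f" by blast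
  qed
  moreover have "finite ((\<lambda>a. a \<circ> s) ` supp f)" using f by (simp add: OA_def)
  moreover have "(\<lambda>a. a \<circ> s) ` supp f \<subseteq> mons n" using f mons_comp[OF s] by (auto simp: OA_def)
  ultimately show ?thesis unfolding OA_def by (auto intro: finite_subset)
qed

lemma phiM_add: "phiM n cs s (oadd f g) = oadd (phiM n cs s f) (phiM n cs s g)"
  by (rule ext) (simp add: phiM_def oadd_def algebra_simps)

lemma phiM_smult: "phiM n cs s (osmult k f) = osmult k (phiM n cs s f)"
  by (rule ext) (simp add: phiM_def osmult_def algebra_simps)

lemma phiI_add: "phiI n cs s (oadd f g) = oadd (phiI n cs s f) (phiI n cs s g)"
  by (rule ext) (simp add: phiI_def oadd_def add_divide_distrib)

lemma phiI_smult: "phiI n cs s (osmult k f) = osmult k (phiI n cs s f)"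
  by (rule ext) (simp add: phiI_def osmult_def)

lemma phiI_zero: "phiI n cs s ozero = ozero"
  by (rule ext) (simp add: phiI_def ozero_def)

lemma Inv_zero: "Inv n s (\<lambda>_. 0) (\<lambda>_. 0) = 0"
  by (simp add: Inv_def)

lemma wt_zero: "wt n cs s (\<lambda>_. 0) = 1"
  by (simp add: wt_def Inv_zero)

lemma zero_comp_iff: "s permutes (S :: nat set) \<Longrightarrow> (c \<circ> s = (\<lambda>_. 0::nat)) \<longleftrightarrow> c = (\<lambda>_. 0)"
proof
  assume s: "s permutes S" and h: "c \<circ> s = (\<lambda>_. 0)"
  have "c = (c \<circ> s) \<circ> pinv s" by (rule comp_inv1[OF s, symmetric])
  also have "\<dots> = (\<lambda>_. 0)" unfolding h by (simp add: comp_def)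
  finally show "c = (\<lambda>_. 0)" .
qed (auto simp: comp_def)

lemma const_comp[simp]: "(\<lambda>_. k) \<circ> f = (\<lambda>_. k)" by (simp add: comp_def)

lemma phiM_one: "s permutes {..<n} \<Longrightarrow> phiM n cs s oone = oone"
  by (rule ext) (auto simp: phiM_def oone_def zero_comp_iff wt_zero)

lemma phiM_hom:
  assumes s: "s permutes {..<n}" and h: "ohomog n d f"
  shows "ohomog n d (phiM n cs s f)"
  unfolding ohomog_def
proof
  fix c assume "c \<in> supp (phiM n cs s f)"
  then have "c \<circ> s \<in> supp f" by (auto simp: supp_def phiM_def)
  then have "mdeg n (c \<circ> s) = d" using h by (simp add: ohomog_def)
  then show "mdeg n c = d" using mdeg_comp[OF s] by simp
qed


lemma Es_reindex:
  assumes s: "s permutes {..<n}"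
  shows "(\<Sum>p<n. \<Sum>q<n. if q < p then (a \<circ> pinv s) p * (b \<circ> pinv s) q else 0)
       = (\<Sum>p<n. \<Sum>q<n. if s q < s p then a p * b q else 0)"
proof -
  have P: "\<And>g. sum g {..<n} = (\<Sum>p<n. g (s p))" using sum.permute[OF s] by (simp add: comp_def)
  have "(\<Sum>p<n. \<Sum>q<n. if q < p then (a \<circ> pinv s) p * (b \<circ> pinv s) q else 0)
      = (\<Sum>p<n. \<Sum>q<n. if q < s p then a p * b (pinv s q) else 0)"
    by (rule trans[OF P[of "\<lambda>p. \<Sum>q<n. if q < p then (a \<circ> pinv s) p * (b \<circ> pinv s) q else 0"]])
      (intro sum.cong refl, simp add: permutes_inverses[OF s] comp_def)
  also have "\<dots> = (\<Sum>p<n. \<Sum>q<n. if s q < s p then a p * b q else 0)"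
  proof (rule sum.cong[OF refl])
    fix p
    show "(\<Sum>q<n. if q < s p then a p * b (pinv s q) else 0) = (\<Sum>q<n. if s q < s p then a p * b q else 0)"
      by (rule trans[OF P[of "\<lambda>q. if q < s p then a p * b (pinv s q) else 0"]])
        (intro sum.cong refl, simp add: permutes_inverses[OF s])
  qed
  finally show ?thesis .
qed

lemma Inv_swap_form: "Inv n s b a = (\<Sum>p<n. \<Sum>q<n. if q < p \<and> s p < s q then a p * b q else 0)"
proof -
  have "Inv n s b a = (\<Sum>q<n. \<Sum>p<n. if p < q \<and> s q < s p then b p * a q else 0)"
    unfolding Inv_def by (rule sum.swap)
  also have "\<dots> = (\<Sum>p<n. \<Sum>q<n. if q < p \<and> s p < s q then a p * b q else 0)"
    by (intro sum.cong refl) (simp add: mult.commute)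
  finally show ?thesis .
qed

lemma Es_Inv:
  assumes s: "s permutes {..<n}"
  shows "(\<Sum>p<n. \<Sum>q<n. if s q < s p then a p * b q else 0) + Inv n s b a
       = (\<Sum>p<n. \<Sum>q<n. if q < p then a p * b q else 0) + Inv n s a b"
proof -
  have inj: "inj s" by (rule permutes_inj[OF s])
  have "(\<Sum>p<n. \<Sum>q<n. if s q < s p then a p * b q else 0) + Inv n s b a
      = (\<Sum>p<n. \<Sum>q<n. (if s q < s p then a p * b q else 0) + (if q < p \<and> s p < s q then a p * b q else 0))"
    unfolding Inv_swap_form by (simp add: sum.distrib)
  also have "\<dots> = (\<Sum>p<n. \<Sum>q<n. (if q < p then a p * b q else 0) + (if p < q \<and> s q < s p then a p * b q else 0))"
  proof (intro sum.cong refl)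
    fix p q
    show "(if s q < s p then a p * b q else 0) + (if q < p \<and> s p < s q then a p * b q else 0)
        = (if q < p then a p * b q else 0) + (if p < q \<and> s q < s p then a p * b q else 0)"
    proof (cases "p = q")
      case True then show ?thesis by simp
    next
      case False
      then have "s p \<noteq> s q" using inj by (auto dest: injD)
      then show ?thesis using False by (cases "p < q"; cases "s p < s q") auto
    qed
  qed
  also have "\<dots> = (\<Sum>p<n. \<Sum>q<n. if q < p then a p * b q else 0) + Inv n s a b"
    unfolding Inv_def by (simp add: sum.distrib)
  finally show ?thesis .
qed

lemma if4: "(if P then (x1 + y1) * (x2 + y2) else (0::nat)) =
  (if P then x1 * x2 else 0) + (if P then x1 * y2 else 0) + (if P then y1 * x2 else 0) + (if P then y1 * y2 else 0)"
  by (simp add: algebra_simps)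

lemma Inv_add: "Inv n s (padd a b) (padd a b) = Inv n s a a + Inv n s a b + Inv n s b a + Inv n s b b"
  unfolding Inv_def if4 by (simp add: sum.distrib)

lemma key_wt:
  assumes s: "s permutes {..<n}"
  shows "wt n cs s (padd a b) * msgn n a b = msgn n (a \<circ> pinv s) (b \<circ> pinv s) * wt n cs s a * (wt n cs s b :: 'k::field)"
proof -
  define E where "E = (\<Sum>p<n. \<Sum>q<n. if q < p then a p * b q else 0)"
  define Es where "Es = (\<Sum>p<n. \<Sum>q<n. if s q < s p then a p * b q else 0)"
  have m1: "msgn n a b = (-1::'k)^E" by (simp add: msgn_alt E_def)
  have m2: "msgn n (a \<circ> pinv s) (b \<circ> pinv s) = (-1::'k)^Es"
    unfolding msgn_alt Es_def using Es_reindex[OF s, of a b] by simp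
  have ei: "Es + Inv n s b a = E + Inv n s a b" unfolding E_def Es_def by (rule Es_Inv[OF s])
  have ex: "Inv n s (padd a b) (padd a b) + E = (Es + Inv n s a a + Inv n s b b) + 2 * Inv n s b a"
    unfolding Inv_add using ei by simp
  have sg: "(-1::'k)^(Inv n s (padd a b) (padd a b)) * (-1)^E = (-1)^Es * (-1)^(Inv n s a a) * (-1)^(Inv n s b b)"
    by (simp only: power_add[symmetric] ex neg1_pow_even_mult)
  have pr: "(\<Prod>i<n. cs i ^ (a i + b i)) = (\<Prod>i<n. cs i ^ a i) * (\<Prod>i<n. cs i ^ b i)"
    by (simp add: power_add prod.distrib)
  show ?thesis unfolding wt_def m1 m2 pr
    using sg by (simp add: algebra_simps)
qed

lemma supp_phiM: "s permutes {..<n} \<Longrightarrow> supp (phiM n cs s f) \<subseteq> (\<lambda>a. a \<circ> pinv s) ` supp f"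
proof
  fix c assume s: "s permutes {..<n}" and "c \<in> supp (phiM n cs s f)"
  then have "c \<circ> s \<in> supp f" by (auto simp: supp_def phiM_def)
  moreover have "c = (c \<circ> s) \<circ> pinv s" by (rule comp_inv1[OF s, symmetric])
  ultimately show "c \<in> (\<lambda>a. a \<circ> pinv s) ` supp f" by blast
qed

lemma padd_comp: "padd (a \<circ> t) (b \<circ> t) = (padd a b) \<circ> t"
  by (auto simp: comp_def)

lemma comp_eq_iff:
  assumes s: "s permutes {..<n}"
  shows "(X \<circ> pinv s = c) \<longleftrightarrow> (X = c \<circ> s)"
proof
  assume "X \<circ> pinv s = c"
  then have "(X \<circ> pinv s) \<circ> s = c \<circ> s" by simp
  then show "X = c \<circ> s" using comp_inv2[OF s] by metis
next
  assume "X = c \<circ> s"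
  then show "X \<circ> pinv s = c" using comp_inv1[OF s] by metis
qed

lemma phiM_mul:
  fixes f g :: "(nat \<Rightarrow> nat) \<Rightarrow> 'k::field"
  assumes s: "s permutes {..<n}" and f: "f \<in> OA n" and g: "g \<in> OA n"
  shows "phiM n cs s (omul n f g) = omul n (phiM n cs s f) (phiM n cs s g)"
proof (rule ext)
  fix c
  define A where "A = supp f"
  define B where "B = supp g"
  have fA: "finite A" "finite B" using f g by (auto simp: A_def B_def OA_def)
  have inj: "inj_on (\<lambda>a. a \<circ> pinv s) X" for X :: "(nat \<Rightarrow> nat) set"
    by (rule inj_onI) (metis comp_inv2[OF s])
  have "omul n (phiM n cs s f) (phiM n cs s g) c
      = (\<Sum>a\<in>(\<lambda>a. a \<circ> pinv s) ` A. \<Sum>b\<in>(\<lambda>a. a \<circ> pinv s) ` B.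
           if padd a b = c then msgn n a b * phiM n cs s f a * phiM n cs s g b else 0)"
    by (rule omul_super) (use fA supp_phiM[OF s] in \<open>auto simp: A_def B_def\<close>)
  also have "\<dots> = (\<Sum>a\<in>A. \<Sum>b\<in>B. if padd (a \<circ> pinv s) (b \<circ> pinv s) = c
        then msgn n (a \<circ> pinv s) (b \<circ> pinv s) * phiM n cs s f (a \<circ> pinv s) * phiM n cs s g (b \<circ> pinv s) else 0)"
    by (rule sum.reindex_cong[OF inj refl], rule sum.reindex_cong[OF inj refl], rule refl)
  also have "\<dots> = (\<Sum>a\<in>A. \<Sum>b\<in>B. if padd (a \<circ> pinv s) (b \<circ> pinv s) = c
        then msgn n (a \<circ> pinv s) (b \<circ> pinv s) * (wt n cs s a * f a) * (wt n cs s b * g b) else 0)"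
    by (intro sum.cong refl) (simp only: phiM_def comp_inv2[OF s])
  also have "\<dots> = (\<Sum>a\<in>A. \<Sum>b\<in>B. wt n cs s (c \<circ> s) * (if padd a b = c \<circ> s then msgn n a b * f a * g b else 0))"
  proof (intro sum.cong refl)
    fix a b
    show "(if padd (a \<circ> pinv s) (b \<circ> pinv s) = c
        then msgn n (a \<circ> pinv s) (b \<circ> pinv s) * (wt n cs s a * f a) * (wt n cs s b * g b) else 0)
      = wt n cs s (c \<circ> s) * (if padd a b = c \<circ> s then msgn n a b * f a * g b else 0)"
    proof (cases "padd a b = c \<circ> s")
      case True
      then have "padd (a \<circ> pinv s) (b \<circ> pinv s) = c"
        unfolding padd_comp comp_eq_iff[OF s] .
      moreover have "wt n cs s (c \<circ> s) * msgn n a b = msgn n (a \<circ> pinv s) (b \<circ> pinv s) * wt n cs s a * wt n cs s b"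
        using key_wt[OF s, of cs a b] True by simp
      ultimately show ?thesis using True by (simp add: algebra_simps)
    next
      case False
      then have "padd (a \<circ> pinv s) (b \<circ> pinv s) \<noteq> c"
        unfolding padd_comp comp_eq_iff[OF s] .
      then show ?thesis using False by simp
    qed
  qed
  also have "\<dots> = phiM n cs s (omul n f g) c"
    by (simp add: phiM_def omul_def A_def B_def sum_distrib_left)
  finally show "phiM n cs s (omul n f g) c = omul n (phiM n cs s f) (phiM n cs s g) c" by simp
qed

lemma phiM_iso:
  fixes cs :: "nat \<Rightarrow> 'k::field"
  assumes s: "s permutes {..<n}" and cs: "\<forall>i<n. cs i \<noteq> 0"
  shows "graded_alg_iso n (phiM n cs s)"
  unfolding graded_alg_iso_def
proof (intro conjI ballI allI impI)
  show "bij_betw (phiM n cs s) (OA n) (OA n)"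
    by (rule bij_betw_byWitness[where f'="phiI n cs s"])
      (use phiI_phiM[OF s cs] phiM_phiI[OF s cs] phiM_OA[OF s] phiI_OA[OF s] in auto)
  show "phiM n cs s oone = oone" by (rule phiM_one[OF s])
  fix f :: "(nat \<Rightarrow> nat) \<Rightarrow> 'k" assume f: "f \<in> OA n"
  {
    fix g :: "(nat \<Rightarrow> nat) \<Rightarrow> 'k" assume g: "g \<in> OA n"
    show "phiM n cs s (oadd f g) = oadd (phiM n cs s f) (phiM n cs s g)" by (rule phiM_add)
    show "phiM n cs s (omul n f g) = omul n (phiM n cs s f) (phiM n cs s g)" by (rule phiM_mul[OF s f g])
  }
  fix c show "phiM n cs s (osmult c f) = osmult c (phiM n cs s f)" by (rule phiM_smult)
next
  fix d and f :: "(nat \<Rightarrow> nat) \<Rightarrow> 'k" assume "f \<in> OA n" "ohomog n d f"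
  then show "ohomog n d (phiM n cs s f)" using phiM_hom[OF s] by blast
qed


lemma qpl_perm:
  fixes C :: "'k::field mat"
  assumes C: "C \<in> QPL n"
  shows "\<exists>\<sigma>. perm_of n (\<lambda>i j. C $$ (i, j)) \<sigma>"
proof (rule qp_perm)
  have all: "C \<in> carrier_mat n n \<and> invertible_mat C \<and> (\<forall>i<n. \<exists>!j. j < n \<and> C $$ (i, j) \<noteq> 0)
     \<and> (\<forall>j<n. \<exists>!i. i < n \<and> C $$ (i, j) \<noteq> 0)"
    using C unfolding QPL_def by (rule CollectD)
  have r: "\<forall>i<n. \<exists>!j. j < n \<and> C $$ (i, j) \<noteq> 0" using conjunct1[OF conjunct2[OF conjunct2[OF all]]] .
  have c: "\<forall>j<n. \<exists>!i. i < n \<and> C $$ (i, j) \<noteq> 0" using conjunct2[OF conjunct2[OF conjunct2[OF all]]] .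
  show "\<forall>i<n. \<exists>j<n. C $$ (i, j) \<noteq> 0"
  proof (intro allI impI)
    fix i assume "i < n"
    then obtain j where "j < n \<and> C $$ (i, j) \<noteq> 0" using r by (meson ex1E)
    then show "\<exists>j<n. C $$ (i, j) \<noteq> 0" by blast
  qed
  show "\<forall>i<n. \<forall>k<n. \<forall>j<n. i \<noteq> k \<longrightarrow> C $$ (i, j) * C $$ (k, j) = 0"
  proof (intro allI impI)
    fix i k j assume "i < n" "k < n" "j < n" "i \<noteq> k"
    moreover obtain i0 where "\<forall>y. y < n \<and> C $$ (y, j) \<noteq> 0 \<longrightarrow> y = i0"
      using c \<open>j < n\<close> by (meson ex1E)
    ultimately show "C $$ (i, j) * C $$ (k, j) = 0" by (metis mult_eq_0_iff)
  qed
qed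

lemma ext_perm:
  assumes P: "perm_of n cc \<sigma>"
  shows "(\<lambda>t. if t < n then \<sigma> t else t) permutes {..<n}"
proof (rule bij_imp_permutes)
  have sl: "\<And>i. i < n \<Longrightarrow> \<sigma> i < n" and inj: "inj_on \<sigma> {..<n}" and im: "\<sigma> ` {..<n} = {..<n}"
    using P unfolding perm_of_def by blast+
  have "inj_on (\<lambda>t. if t < n then \<sigma> t else t) {..<n}"
    using inj by (auto simp: inj_on_def)
  moreover have "(\<lambda>t. if t < n then \<sigma> t else t) ` {..<n} = {..<n}"
    using im by (auto simp: image_def)
  ultimately show "bij_betw (\<lambda>t. if t < n then \<sigma> t else t) {..<n} {..<n}"
    by (simp add: bij_betw_def)
next
  fix x assume "x \<notin> {..<n}" then show "(if x < n then \<sigma> x else x) = x" by simp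
qed

lemma Inv_single: "Inv n s (\<lambda>t. k * ee m t) (\<lambda>t. k * ee m t) = 0"
  unfolding Inv_def by (auto simp: ee_apply intro!: sum.neutral)

lemma prod_single: "m < n \<Longrightarrow> (\<Prod>i<n. cs i ^ (k * ee m i)) = (cs m ^ k :: 'k::field)"
proof -
  assume m: "m < n"
  have "(\<Prod>i<n. cs i ^ (k * ee m i)) = (\<Prod>i<n. if i = m then cs m ^ k else 1)"
    by (rule prod.cong) (auto simp: ee_apply)
  then show ?thesis using m by simp
qed

lemma wt_ee: "m < n \<Longrightarrow> wt n cs s (ee m) = cs m"
proof -
  assume m: "m < n"
  have "wt n cs s (\<lambda>t. 1 * ee m t) = cs m ^ 1"
    unfolding wt_def Inv_single prod_single[OF m] by simp
  then show ?thesis by simp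
qed

lemma wt_tm: "m < n \<Longrightarrow> wt n cs s (tm m) = cs m ^ 2"
  unfolding wt_def tm_def Inv_single by (simp add: prod_single)

lemma ee_comp: "s permutes {..<n} \<Longrightarrow> ee i \<circ> pinv s = ee (s i)"
  by (rule ext) (auto simp: ee_apply permutes_inverses)

lemma tm_comp: "s permutes {..<n} \<Longrightarrow> tm l \<circ> s = tm (pinv s l)"
  by (rule ext) (auto simp: tm_def ee_apply permutes_inverses)

lemma phiM_xgen:
  assumes s: "s permutes {..<n}" and i: "i < n"
  shows "phiM n cs s (xgen i) = osmult (cs i) (xgen (s i))"
proof (rule ext)
  fix c
  have "c \<circ> s = ee i \<longleftrightarrow> c = ee (s i)"
    using comp_eq_iff[OF s, of "ee i" c] ee_comp[OF s] by metis
  then show "phiM n cs s (xgen i) c = osmult (cs i) (xgen (s i)) c"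
    by (auto simp: phiM_def osmult_def xgen_mon mon_def wt_ee[OF i])
qed

lemma sq_tm: "omul n (xgen l) (xgen l) c = (if c = tm l then 1 else (0::'k::field))"
  by (simp add: sq_ee mon_def tm_def)


lemma phiI_mul:
  fixes X Y :: "(nat \<Rightarrow> nat) \<Rightarrow> 'k::field"
  assumes s: "s permutes {..<n}" and cs: "\<forall>i<n. cs i \<noteq> 0" and X: "X \<in> OA n" and Y: "Y \<in> OA n"
  shows "phiI n cs s (omul n X Y) = omul n (phiI n cs s X) (phiI n cs s Y)"
proof -
  have "phiM n cs s (omul n (phiI n cs s X) (phiI n cs s Y)) = omul n X Y"
    using phiM_mul[OF s phiI_OA[OF s X] phiI_OA[OF s Y]] phiM_phiI[OF s cs] by simp
  then have "phiI n cs s (phiM n cs s (omul n (phiI n cs s X) (phiI n cs s Y))) = phiI n cs s (omul n X Y)"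
    by simp
  then show ?thesis using phiI_phiM[OF s cs] by simp
qed

lemma backward:
  fixes M M' C D :: "'k::field mat"
  assumes M: "M \<in> carrier_mat n n" and M': "M' \<in> carrier_mat n n" and CQ: "C \<in> QPL n"
    and Dc: "D \<in> carrier_mat n n" and CD: "C * D = 1\<^sub>m n" and DC: "D * C = 1\<^sub>m n"
    and eq: "M' = D * M * map_mat (\<lambda>c. c ^ 2) C"
  shows "dga_isomorphic n M M'"
proof -
  obtain \<sigma> where P: "perm_of n (\<lambda>i j. C $$ (i, j)) \<sigma>" using qpl_perm[OF CQ] by blast
  define s where "s = (\<lambda>t. if t < n then \<sigma> t else t)"
  have s: "s permutes {..<n}" using ext_perm[OF P] by (simp add: s_def)
  have sl: "\<And>i. i < n \<Longrightarrow> s i < n" using P by (simp add: s_def perm_of_def)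
  have iff: "\<And>i j. i < n \<Longrightarrow> j < n \<Longrightarrow> C $$ (i, j) \<noteq> 0 \<longleftrightarrow> j = s i"
    using P by (simp add: s_def perm_of_def)
  define cs where "cs i = C $$ (i, s i)" for i
  have csnz: "\<forall>i<n. cs i \<noteq> 0" using iff sl by (simp add: cs_def)
  define \<phi> where "\<phi> = phiM n cs s"
  have gi: "graded_alg_iso n \<phi>" unfolding \<phi>_def by (rule phiM_iso[OF s csnz])
  have Cc: "C \<in> carrier_mat n n" using CQ by (simp add: QPL_def)
  define C2 where "C2 = map_mat (\<lambda>c. c ^ 2) C"
  have C2c: "C2 \<in> carrier_mat n n" using Cc by (simp add: C2_def)
  have CM: "C * M' = M * C2"
  proof -
    have "C * M' = C * ((D * M) * C2)" by (simp add: eq C2_def)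
    also have "\<dots> = (C * (D * M)) * C2"
      by (rule assoc_mult_mat[symmetric]) (use Cc Dc M C2c in auto)
    also have "C * (D * M) = (C * D) * M" by (rule assoc_mult_mat[symmetric]) (use Cc Dc M in auto)
    also have "\<dots> = M" using CD M by simp
    finally show ?thesis .
  qed
  have pinvl: "\<And>l. l < n \<Longrightarrow> pinv s l < n"
    using permutes_in_image[OF permutes_inv[OF s]] by simp
  have rel: "cs i * M' $$ (s i, l) = M $$ (i, pinv s l) * cs (pinv s l) ^ 2" if i: "i < n" and l: "l < n" for i l
  proof -
    define k where "k = pinv s l"
    have k: "k < n" "s k = l" using pinvl[OF l] permutes_inverses[OF s] by (simp_all add: k_def)
    have "(C * M') $$ (i, l) = (\<Sum>t<n. C $$ (i, t) * M' $$ (t, l))" by (rule mult_entry[OF Cc M' i l])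
    also have "\<dots> = (\<Sum>t<n. if t = s i then C $$ (i, t) * M' $$ (t, l) else 0)"
      by (rule sum.cong[OF refl]) (use iff[OF i] in auto)
    also have "\<dots> = cs i * M' $$ (s i, l)" using sl[OF i] by (simp add: sum.delta cs_def)
    finally have A: "(C * M') $$ (i, l) = cs i * M' $$ (s i, l)" .
    have "(M * C2) $$ (i, l) = (\<Sum>t<n. M $$ (i, t) * C2 $$ (t, l))" by (rule mult_entry[OF M C2c i l])
    also have "\<dots> = (\<Sum>t<n. if t = k then M $$ (i, t) * C $$ (t, l) ^ 2 else 0)"
    proof (rule sum.cong[OF refl])
      fix t assume t: "t \<in> {..<n}"
      have "C $$ (t, l) \<noteq> 0 \<longleftrightarrow> t = k" using iff[of t l] t l k s by (auto dest: permutes_inj[THEN injD])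
      then show "M $$ (i, t) * C2 $$ (t, l) = (if t = k then M $$ (i, t) * C $$ (t, l) ^ 2 else 0)"
        using t l Cc by (auto simp: C2_def)
    qed
    also have "\<dots> = M $$ (i, k) * cs k ^ 2" using k by (simp add: sum.delta cs_def)
    finally have B: "(M * C2) $$ (i, l) = M $$ (i, k) * cs k ^ 2" .
    show ?thesis using A B CM by (simp add: k_def)
  qed
  define d' where "d' = dga_diff n M'"
  have dM': "is_diff n M' d'" unfolding d'_def by (rule dga_diff_is)
  have d'OA: "\<And>f. f \<in> OA n \<Longrightarrow> d' f \<in> OA n" using dM' unfolding is_diff_def by blast
  have d'add: "\<And>f g. f \<in> OA n \<Longrightarrow> g \<in> OA n \<Longrightarrow> d' (oadd f g) = oadd (d' f) (d' g)"
    using dM' unfolding is_diff_def by blast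
  have d'sm: "\<And>c f. f \<in> OA n \<Longrightarrow> d' (osmult c f) = osmult c (d' f)"
    using dM' unfolding is_diff_def by blast
  have d'x: "\<And>i. i < n \<Longrightarrow> d' (xgen i) = (\<lambda>a. \<Sum>j<n. M' $$ (i, j) * omul n (xgen j) (xgen j) a)"
    using dM' unfolding is_diff_def by blast
  have d'L: "\<And>p f g. f \<in> OA n \<Longrightarrow> g \<in> OA n \<Longrightarrow> ohomog n p f \<Longrightarrow>
      d' (omul n f g) = oadd (omul n (d' f) g) (osmult ((-1) ^ p) (omul n f (d' g)))"
    using dM' unfolding is_diff_def by blast
  define \<psi> where "\<psi> f = (if f \<in> OA n then phiI n cs s (d' (\<phi> f)) else ozero)" for f
  have \<phi>OA: "\<And>f. f \<in> OA n \<Longrightarrow> \<phi> f \<in> OA n" unfolding \<phi>_def by (rule phiM_OA[OF s])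
  have isd: "is_diff n M \<psi>"
    unfolding is_diff_def
  proof (intro conjI allI ballI impI)
    fix f :: "(nat \<Rightarrow> nat) \<Rightarrow> 'k" assume f: "f \<in> OA n"
    show "\<psi> f \<in> OA n" using f by (simp add: \<psi>_def phiI_OA[OF s] d'OA \<phi>OA)
    {
      fix g :: "(nat \<Rightarrow> nat) \<Rightarrow> 'k" assume g: "g \<in> OA n"
      show "\<psi> (oadd f g) = oadd (\<psi> f) (\<psi> g)"
        using f g oadd_OA[OF f g]
        by (simp add: \<psi>_def \<phi>_def phiM_add d'add phiM_OA[OF s] phiI_add)
    }
    fix c show "\<psi> (osmult c f) = osmult c (\<psi> f)"
      using f osmult_OA[OF f]
      by (simp add: \<psi>_def \<phi>_def phiM_smult d'sm phiM_OA[OF s] phiI_smult)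
  next
    fix f :: "(nat \<Rightarrow> nat) \<Rightarrow> 'k" assume "f \<notin> OA n"
    then show "\<psi> f = ozero" by (simp add: \<psi>_def)
  next
    fix i assume i: "i < n"
    define T where "T = (\<lambda>a. \<Sum>j<n. M $$ (i, j) * omul n (xgen j) (xgen j) a)"
    have TO: "T \<in> OA n" unfolding T_def
      using sum_OA[of "{..<n}" "\<lambda>j a. M $$ (i, j) * omul n (xgen j) (xgen j) a" n]
        osmult_OA[unfolded osmult_def, OF omul_OA[OF xgen_OA xgen_OA]] by auto
    have claim: "osmult (cs i) (d' (xgen (s i))) = \<phi> T"
    proof (rule ext)
      fix c
      have L: "osmult (cs i) (d' (xgen (s i))) c = cs i * (\<Sum>l<n. M' $$ (s i, l) * (if c = tm l then 1 else 0))"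
        by (simp add: osmult_def d'x[OF sl[OF i]] sq_tm)
      have R: "\<phi> T c = wt n cs s (c \<circ> s) * (\<Sum>j<n. M $$ (i, j) * (if c \<circ> s = tm j then 1 else 0))"
        by (simp add: \<phi>_def phiM_def T_def sq_tm)
      show "osmult (cs i) (d' (xgen (s i))) c = \<phi> T c"
      proof (cases "\<exists>l0<n. c = tm l0")
        case True
        then obtain l0 where l0: "l0 < n" "c = tm l0" by blast
        define k where "k = pinv s l0"
        have k: "k < n" using pinvl[OF l0(1)] by (simp add: k_def)
        have cs': "c \<circ> s = tm k" using tm_comp[OF s] l0 by (simp add: k_def)
        have "osmult (cs i) (d' (xgen (s i))) c = cs i * (\<Sum>l<n. if l = l0 then M' $$ (s i, l) else 0)"
          unfolding L by (intro arg_cong[where f="\<lambda>x. _ * x"] sum.cong refl) (use l0 tm_inj in auto)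
        also have "\<dots> = cs i * M' $$ (s i, l0)" using l0 by simp
        finally have L2: "osmult (cs i) (d' (xgen (s i))) c = cs i * M' $$ (s i, l0)" .
        have "\<phi> T c = cs k ^ 2 * (\<Sum>j<n. if j = k then M $$ (i, j) else 0)"
          unfolding R cs' wt_tm[OF k] by (intro arg_cong[where f="\<lambda>x. _ * x"] sum.cong refl) (use tm_inj in auto)
        also have "\<dots> = cs k ^ 2 * M $$ (i, k)" using k by simp
        finally have R2: "\<phi> T c = cs k ^ 2 * M $$ (i, k)" .
        show ?thesis unfolding L2 R2 using rel[OF i l0(1)] by (simp add: k_def mult.commute)
      next
        case False
        have "osmult (cs i) (d' (xgen (s i))) c = 0"
          unfolding L using False by (auto intro!: sum.neutral)
        moreover have "\<phi> T c = 0"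
        proof -
          have "c \<circ> s \<noteq> tm j" if j: "j < n" for j
          proof
            assume h: "c \<circ> s = tm j"
            have "tm (s j) \<circ> s = tm j" using tm_comp[OF s, of "s j"] permutes_inverses[OF s] by simp
            then have "c \<circ> s = tm (s j) \<circ> s" using h by simp
            then have "(c \<circ> s) \<circ> pinv s = (tm (s j) \<circ> s) \<circ> pinv s" by simp
            then have "c = tm (s j)" using comp_inv1[OF s] by metis
            then show False using False sl[OF j] by blast
          qed
          then show ?thesis unfolding R by (auto intro!: sum.neutral)
        qed
        ultimately show ?thesis by simp
      qed
    qed
    have "\<psi> (xgen i) = phiI n cs s (d' (osmult (cs i) (xgen (s i))))"
    proof -
      have xi: "(xgen i :: (nat \<Rightarrow> nat) \<Rightarrow> 'k) \<in> OA n" by (rule xgen_OA[OF i])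
      show ?thesis using xi by (simp add: \<psi>_def \<phi>_def phiM_xgen[OF s i])
    qed
    also have "\<dots> = phiI n cs s (\<phi> T)" using d'sm[OF xgen_OA[OF sl[OF i]]] claim by simp
    also have "\<dots> = T" unfolding \<phi>_def by (rule phiI_phiM[OF s csnz])
    finally show "\<psi> (xgen i) = (\<lambda>a. \<Sum>j<n. M $$ (i, j) * omul n (xgen j) (xgen j) a)" by (simp add: T_def)
  next
    fix p and f g :: "(nat \<Rightarrow> nat) \<Rightarrow> 'k" assume f: "f \<in> OA n" and g: "g \<in> OA n" and h: "ohomog n p f"
    have hf: "ohomog n p (\<phi> f)" unfolding \<phi>_def by (rule phiM_hom[OF s h])
    have "\<psi> (omul n f g) = phiI n cs s (d' (omul n (\<phi> f) (\<phi> g)))"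
      using omul_OA[OF f g] by (simp add: \<psi>_def \<phi>_def phiM_mul[OF s f g])
    also have "\<dots> = phiI n cs s (oadd (omul n (d' (\<phi> f)) (\<phi> g)) (osmult ((-1) ^ p) (omul n (\<phi> f) (d' (\<phi> g)))))"
      by (simp add: d'L[OF \<phi>OA[OF f] \<phi>OA[OF g] hf])
    also have "\<dots> = oadd (omul n (phiI n cs s (d' (\<phi> f))) (phiI n cs s (\<phi> g)))
        (osmult ((-1) ^ p) (omul n (phiI n cs s (\<phi> f)) (phiI n cs s (d' (\<phi> g)))))"
      by (simp add: phiI_add phiI_smult phiI_mul[OF s csnz] d'OA \<phi>OA f g)
    also have "\<dots> = oadd (omul n (\<psi> f) g) (osmult ((-1) ^ p) (omul n f (\<psi> g)))"
      using f g by (simp add: \<psi>_def \<phi>_def phiI_phiM[OF s csnz])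
    finally show "\<psi> (omul n f g) = oadd (omul n (\<psi> f) g) (osmult ((-1) ^ p) (omul n f (\<psi> g)))" .
  qed
  have dd: "dga_diff n M = \<psi>" by (rule is_diff_unique[OF dga_diff_is isd])
  show ?thesis unfolding dga_isomorphic_def
  proof (intro exI conjI ballI)
    show "graded_alg_iso n \<phi>" by (rule gi)
    fix f :: "(nat \<Rightarrow> nat) \<Rightarrow> 'k" assume f: "f \<in> OA n"
    show "\<phi> (dga_diff n M f) = dga_diff n M' (\<phi> f)"
      using f unfolding dd \<psi>_def d'_def[symmetric] \<phi>_def by (simp add: phiM_phiI[OF s csnz])
  qed
qed


theorem theorem3p6:
  fixes n :: nat and M M' :: "'k::field_char_0 mat"
  assumes "alg_closed_type TYPE('k)"
    and "n \<ge> 2"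
    and "M \<in> carrier_mat n n" and "M' \<in> carrier_mat n n"
  shows "dga_isomorphic n M M' \<longleftrightarrow>
    (\<exists>C \<in> QPL n. \<exists>D \<in> carrier_mat n n.
       C * D = 1\<^sub>m n \<and> D * C = 1\<^sub>m n \<and>
       M' = D * M * map_mat (\<lambda>c. c ^ 2) C)"
proof
  assume "dga_isomorphic n M M'"
  then show "\<exists>C \<in> QPL n. \<exists>D \<in> carrier_mat n n.
       C * D = 1\<^sub>m n \<and> D * C = 1\<^sub>m n \<and> M' = D * M * map_mat (\<lambda>c. c ^ 2) C"
    by (rule forward[OF assms(3) assms(4)])
next
  assume "\<exists>C \<in> QPL n. \<exists>D \<in> carrier_mat n n.
       C * D = 1\<^sub>m n \<and> D * C = 1\<^sub>m n \<and> M' = D * M * map_mat (\<lambda>c. c ^ 2) C"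
  then obtain C D where "C \<in> QPL n" "D \<in> carrier_mat n n" "C * D = 1\<^sub>m n" "D * C = 1\<^sub>m n"
    "M' = D * M * map_mat (\<lambda>c. c ^ 2) C" by blast
  then show "dga_isomorphic n M M'" by (rule backward[OF assms(3) assms(4)])
qed

end
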